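(* Let $\mathcal P$ be a polycyclic presentation on $g_1,\ldots,g_n$ with $r_1=\infty$, assume the subpresentation $\mathcal P^{[2]}$ is consistent, and assume there is an endomorphism $\sigma$ of $H^{[2]}$ with $\sigma(g_j)=g^{a_{1,j}}$ for $2\le j\le n$. If $c(g_jg_1^{-1}g_1)=c(g_j)$ holds for all $j>1$, then $\sigma$ is an automorphism of $H^{[2]}$ and the map $g_j\mapsto g^{b_{1,j}}$ ($2\le j\le n$) induces the automorphism $\sigma^{-1}$ of $H^{[2]}$.
   Context: A polycyclic presentation $\mathcal P$ on generators $g_1,\ldots,g_n$ consists of $r_1,\ldots,r_n\in\mathbb N\cup\{\infty\}$ and integers $e_{i,k},a_{i,j,k},b_{i,j,k}$ ($1\le i<j\le n$, $1\le k\le n$) with $0\le e_{i,k},a_{i,j,k},b_{i,j,k}<r_k$ whenever $r_k<\infty$, and has defining relations $g_i^{r_i}=g^{e_i}$ (for $r_i<\infty$), $g_jg_i=g_ig^{a_{i,j}}$ (for $i<j$), $g_jg_i^{-1}=g_i^{-1}g^{b_{i,j}}$ (for $i<j$, $r_i=\infty$), where $g^{e_i}=g_{i+1}^{e_{i,i+1}}\cdots g_n^{e_{i,n}}$, $g^{a_{i,j}}=g_{i+1}^{a_{i,j,i+1}}\cdots g_n^{a_{i,j,n}}$, $g^{b_{i,j}}=g_{i+1}^{b_{i,j,i+1}}\cdots g_n^{b_{i,j,n}}$ (with $g_k^x$ for $x<0$ meaning $(g_k^{-1})^{|x|}$). From the presentation one computes integers $c_{i,j,k},d_{i,j,k},f_{i,k}$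 (in $[0,r_k)$ when $r_k<\infty$) such that in the presented group $g_j^{-1}g_i=g_ig^{c_{i,j}}$ ($i<j$, $r_j=\infty$), $g_j^{-1}g_i^{-1}=g_i^{-1}g^{d_{i,j}}$ ($i<j$, $r_i=r_j=\infty$), $g_i^{-1}=g_i^{r_i-1}g^{f_i}$ ($r_i<\infty$). Let $M$ be the free monoid on $\{g_1^{\pm1},\ldots,g_n^{\pm1}\}$. A collection step replaces a subword equal to the left-hand side of one of these six kinds of relations by its right-hand side, or deletes $g_ig_i^{-1}$ or $g_i^{-1}g_i$; a word admitting no step is reduced (of the form $g_1^{x_1}\cdots g_n^{x_n}$ with $0\le x_i<r_i$ if $r_i<\infty$). The collection-to-the-left algorithm applies steps, always choosing the leftmost occurrence of a non-reduced subword involving a generator of smallest index (lower index has priority), until the word is reduced; $c\colon M\to M$ maps a word to the result. $\mathcal P^{[2]}$ is the presentation on $g_2,\ldots,g_n$ consisting of those relations above with $i\ge2$; $H^{[2]}$ is the group it defines. $\mathcal P^{[2]}$ is consistent if every element of $H^{[2]}$ is represented by exactly one reduced word in $g_2,\ldots,g_n$. *)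

theory Defs
  imports "HOL-Algebra.Group"
begin

(* Letters of the free monoid M on g_1^{+-1},...,g_n^{+-1}:
   (k, True) stands for g_k and (k, False) for g_k^{-1}. *)
type_synonym letter = "nat \<times> bool"
type_synonym word = "letter list"

(* The data of a polycyclic presentation P.
   rel_order k = None means r_k = infinity, Some m means r_k = m.
   ex i k = e_{i,k},  ca i j k = a_{i,j,k},  cb i j k = b_{i,j,k}. *)
record pcp =
  ngen :: nat
  rel_order :: "nat \<Rightarrow> nat option"
  ex :: "nat \<Rightarrow> nat \<Rightarrow> int"
  ca :: "nat \<Rightarrow> nat \<Rightarrow> nat \<Rightarrow> int"
  cb :: "nat \<Rightarrow> nat \<Rightarrow> nat \<Rightarrow> int"

(* The derived integers: cc i j k = c_{i,j,k}, cd i j k = d_{i,j,k}, cf i k = f_{i,k}. *)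
record pcp_aux =
  cc :: "nat \<Rightarrow> nat \<Rightarrow> nat \<Rightarrow> int"
  cd :: "nat \<Rightarrow> nat \<Rightarrow> nat \<Rightarrow> int"
  cf :: "nat \<Rightarrow> nat \<Rightarrow> int"

definition gpow :: "nat \<Rightarrow> int \<Rightarrow> word" where
  "gpow k x = replicate (nat \<bar>x\<bar>) (k, 0 \<le> x)"

definition gvec :: "pcp \<Rightarrow> nat \<Rightarrow> (nat \<Rightarrow> int) \<Rightarrow> word" where
  "gvec P i v = concat (map (\<lambda>k. gpow k (v k)) [Suc i..<Suc (ngen P)])"

definition inv_word :: "word \<Rightarrow> word" where
  "inv_word w = rev (map (\<lambda>(k, s). (k, \<not> s)) w)"

definition in_range :: "pcp \<Rightarrow> nat \<Rightarrow> int \<Rightarrow> bool" where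
  "in_range P k x = (case rel_order P k of None \<Rightarrow> True | Some m \<Rightarrow> 0 \<le> x \<and> x < int m)"

definition pcp_wf :: "pcp \<Rightarrow> bool" where
  "pcp_wf P \<longleftrightarrow>
     (\<forall>i k. 1 \<le> i \<and> i < k \<and> k \<le> ngen P \<longrightarrow> in_range P k (ex P i k)) \<and>
     (\<forall>i j k. 1 \<le> i \<and> i < j \<and> j \<le> ngen P \<and> i < k \<and> k \<le> ngen P \<longrightarrow>
        in_range P k (ca P i j k) \<and> in_range P k (cb P i j k))"

definition words_over :: "pcp \<Rightarrow> nat \<Rightarrow> word set" where
  "words_over P s = {w. \<forall>x\<in>set w. s \<le> fst x \<and> fst x \<le> ngen P}"

(* Defining relations (lhs, rhs) of the subpresentation P^[s] (those with i >= s) *)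
inductive pres_rel :: "pcp \<Rightarrow> nat \<Rightarrow> word \<Rightarrow> word \<Rightarrow> bool" for P s where
  power: "s \<le> i \<Longrightarrow> i \<le> ngen P \<Longrightarrow> rel_order P i = Some m \<Longrightarrow>
          pres_rel P s (replicate m (i, True)) (gvec P i (ex P i))"
| conj: "s \<le> i \<Longrightarrow> i < j \<Longrightarrow> j \<le> ngen P \<Longrightarrow>
          pres_rel P s [(j, True), (i, True)] ((i, True) # gvec P i (ca P i j))"
| conj_inv: "s \<le> i \<Longrightarrow> i < j \<Longrightarrow> j \<le> ngen P \<Longrightarrow> rel_order P i = None \<Longrightarrow>
          pres_rel P s [(j, True), (i, False)] ((i, False) # gvec P i (cb P i j))"

(* The congruence on words over g_s..g_n defining the group H^[s]
   (free cancellation plus the defining relations of P^[s]) *)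
inductive peq :: "pcp \<Rightarrow> nat \<Rightarrow> word \<Rightarrow> word \<Rightarrow> bool" for P s where
  refl: "w \<in> words_over P s \<Longrightarrow> peq P s w w"
| sym: "peq P s u v \<Longrightarrow> peq P s v u"
| trans: "peq P s u v \<Longrightarrow> peq P s v w \<Longrightarrow> peq P s u w"
| rel: "pres_rel P s l r \<Longrightarrow> u \<in> words_over P s \<Longrightarrow> v \<in> words_over P s \<Longrightarrow>
        peq P s (u @ l @ v) (u @ r @ v)"
| free: "s \<le> i \<Longrightarrow> i \<le> ngen P \<Longrightarrow> u \<in> words_over P s \<Longrightarrow> v \<in> words_over P s \<Longrightarrow>
        peq P s (u @ [(i, b), (i, \<not> b)] @ v) (u @ v)"

definition cls :: "pcp \<Rightarrow> nat \<Rightarrow> word \<Rightarrow> word set" where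
  "cls P s w = {v. peq P s w v}"

(* The group H^[s] defined by P^[s], as a quotient of the free monoid *)
definition Hgrp :: "pcp \<Rightarrow> nat \<Rightarrow> word set monoid" where
  "Hgrp P s = \<lparr> carrier = cls P s ` words_over P s,
                mult = (\<lambda>X Y. {w. \<exists>x\<in>X. \<exists>y\<in>Y. peq P s (x @ y) w}),
                one = cls P s [] \<rparr>"

definition reduced_word :: "pcp \<Rightarrow> nat \<Rightarrow> word \<Rightarrow> bool" where
  "reduced_word P s w \<longleftrightarrow>
     (\<exists>x. w = gvec P (s - 1) x \<and> (\<forall>k. s \<le> k \<and> k \<le> ngen P \<longrightarrow> in_range P k (x k)))"

definition consistent :: "pcp \<Rightarrow> nat \<Rightarrow> bool" where
  "consistent P s \<longleftrightarrow> (\<forall>X \<in> carrier (Hgrp P s). \<exists>!w. w \<in> X \<and> reduced_word P s w)"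

(* The derived integers c, d, f: bounds, and the identities they are computed from,
   valid in H^[i+1]:  g^{c_{i,j}} = (g^{a_{i,j}})^{-1},  g^{d_{i,j}} = (g^{b_{i,j}})^{-1},
   g^{f_i} = (g^{e_i})^{-1}.  (These yield g_j^{-1} g_i = g_i g^{c_{i,j}},
   g_j^{-1} g_i^{-1} = g_i^{-1} g^{d_{i,j}}, g_i^{-1} = g_i^{r_i - 1} g^{f_i}.) *)
definition aux_ok :: "pcp \<Rightarrow> pcp_aux \<Rightarrow> bool" where
  "aux_ok P C \<longleftrightarrow>
     (\<forall>i j. 1 \<le> i \<and> i < j \<and> j \<le> ngen P \<and> rel_order P j = None \<longrightarrow>
        (\<forall>k. i < k \<and> k \<le> ngen P \<longrightarrow> in_range P k (cc C i j k)) \<and>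
        peq P (Suc i) (gvec P i (cc C i j)) (inv_word (gvec P i (ca P i j)))) \<and>
     (\<forall>i j. 1 \<le> i \<and> i < j \<and> j \<le> ngen P \<and> rel_order P i = None \<and> rel_order P j = None \<longrightarrow>
        (\<forall>k. i < k \<and> k \<le> ngen P \<longrightarrow> in_range P k (cd C i j k)) \<and>
        peq P (Suc i) (gvec P i (cd C i j)) (inv_word (gvec P i (cb P i j)))) \<and>
     (\<forall>i. 1 \<le> i \<and> i \<le> ngen P \<and> rel_order P i \<noteq> None \<longrightarrow>
        (\<forall>k. i < k \<and> k \<le> ngen P \<longrightarrow> in_range P k (cf C i k)) \<and>
        peq P (Suc i) (gvec P i (cf C i)) (inv_word (gvec P i (ex P i))))"

(* Collection rules lhs -> rhs of the full presentation P.  The nat i is the index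
   of the generator of smallest index involved; rank 0 marks free cancellations,
   rank 1 the six kinds of relations. *)
inductive coll_rule :: "pcp \<Rightarrow> pcp_aux \<Rightarrow> nat \<Rightarrow> nat \<Rightarrow> word \<Rightarrow> word \<Rightarrow> bool" for P C where
  power: "1 \<le> i \<Longrightarrow> i \<le> ngen P \<Longrightarrow> rel_order P i = Some m \<Longrightarrow> 0 < m \<Longrightarrow>
          coll_rule P C i 1 (replicate m (i, True)) (gvec P i (ex P i))"
| conj_a: "1 \<le> i \<Longrightarrow> i < j \<Longrightarrow> j \<le> ngen P \<Longrightarrow>
          coll_rule P C i 1 [(j, True), (i, True)] ((i, True) # gvec P i (ca P i j))"
| conj_b: "1 \<le> i \<Longrightarrow> i < j \<Longrightarrow> j \<le> ngen P \<Longrightarrow> rel_order P i = None \<Longrightarrow>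
          coll_rule P C i 1 [(j, True), (i, False)] ((i, False) # gvec P i (cb P i j))"
| conj_c: "1 \<le> i \<Longrightarrow> i < j \<Longrightarrow> j \<le> ngen P \<Longrightarrow> rel_order P j = None \<Longrightarrow>
          coll_rule P C i 1 [(j, False), (i, True)] ((i, True) # gvec P i (cc C i j))"
| conj_d: "1 \<le> i \<Longrightarrow> i < j \<Longrightarrow> j \<le> ngen P \<Longrightarrow> rel_order P i = None \<Longrightarrow>
          rel_order P j = None \<Longrightarrow>
          coll_rule P C i 1 [(j, False), (i, False)] ((i, False) # gvec P i (cd C i j))"
| inverse: "1 \<le> i \<Longrightarrow> i \<le> ngen P \<Longrightarrow> rel_order P i = Some m \<Longrightarrow>
          coll_rule P C i 1 [(i, False)] (replicate (m - 1) (i, True) @ gvec P i (cf C i))"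
| free: "1 \<le> i \<Longrightarrow> i \<le> ngen P \<Longrightarrow> coll_rule P C i 0 [(i, b), (i, \<not> b)] []"

definition coll_occ :: "pcp \<Rightarrow> pcp_aux \<Rightarrow> word \<Rightarrow> nat \<Rightarrow> nat \<Rightarrow> nat \<Rightarrow> word \<Rightarrow> word \<Rightarrow> bool" where
  "coll_occ P C w i k p l r \<longleftrightarrow>
     coll_rule P C i k l r \<and> p + length l \<le> length w \<and> take (length l) (drop p w) = l"

(* One step of collection to the left: apply the occurrence whose smallest generator
   index is least; among those the leftmost; ties at the same position are broken in
   favour of free cancellation. *)
definition coll_step :: "pcp \<Rightarrow> pcp_aux \<Rightarrow> word \<Rightarrow> word \<Rightarrow> bool" where
  "coll_step P C w w' \<longleftrightarrow>
     (\<exists>i k p l r. coll_occ P C w i k p l r \<and>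
        w' = take p w @ r @ drop (p + length l) w \<and>
        (\<forall>i' k' p' l' r'. coll_occ P C w i' k' p' l' r' \<longrightarrow>
           i < i' \<or> (i = i' \<and> (p < p' \<or> (p = p' \<and> k \<le> k')))))"

definition coll_result :: "pcp \<Rightarrow> pcp_aux \<Rightarrow> word \<Rightarrow> word \<Rightarrow> bool" where
  "coll_result P C w v \<longleftrightarrow> (coll_step P C)\<^sup>*\<^sup>* w v \<and> \<not> (\<exists>v'. coll_step P C v v')"

end

theory Submission
  imports Defs
begin


lemma words_over_Cons[simp]: "(x # w \<in> words_over P s) \<longleftrightarrow> s \<le> fst x \<and> fst x \<le> ngen P \<and> w \<in> words_over P s"
  by (auto simp: words_over_def)
lemma words_over_append[simp]: "(u @ w \<in> words_over P s) \<longleftrightarrow> u \<in> words_over P s \<and> w \<in> words_over P s"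
  by (auto simp: words_over_def)
lemma words_over_Nil[simp]: "[] \<in> words_over P s"
  by (auto simp: words_over_def)
lemma words_over_mono: "w \<in> words_over P s' \<Longrightarrow> s \<le> s' \<Longrightarrow> w \<in> words_over P s"
  by (auto simp: words_over_def)

lemma gpow_set: "x \<in> set (gpow k v) \<Longrightarrow> fst x = k"
  by (auto simp: gpow_def)

lemma gvec_words: "gvec P i v \<in> words_over P (Suc i)"
  by (auto simp: gvec_def words_over_def dest!: gpow_set)

lemma gvec_set: "x \<in> set (gvec P i v) \<Longrightarrow> Suc i \<le> fst x \<and> fst x \<le> ngen P"
  using gvec_words[of P i v] by (auto simp: words_over_def)

lemma inv_word_words[simp]: "(inv_word w \<in> words_over P s) = (w \<in> words_over P s)"
  by (auto simp: inv_word_def words_over_def)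

lemma pres_rel_words: "pres_rel P s l r \<Longrightarrow> l \<in> words_over P s \<and> r \<in> words_over P s"
  by (induct rule: pres_rel.induct)
     (auto simp: words_over_def dest!: gvec_set)

lemma peq_words: "peq P s u v \<Longrightarrow> u \<in> words_over P s \<and> v \<in> words_over P s"
  by (induct rule: peq.induct) (auto dest: pres_rel_words)

lemma pres_rel_mono: "pres_rel P s' l r \<Longrightarrow> s \<le> s' \<Longrightarrow> pres_rel P s l r"
  by (induct rule: pres_rel.induct) (auto intro: pres_rel.intros)

lemma peq_mono: "peq P s' u v \<Longrightarrow> s \<le> s' \<Longrightarrow> peq P s u v"
proof (induct rule: peq.induct)
  case (refl w) then show ?case by (auto intro: peq.refl words_over_mono)
next
  case (sym u v) then show ?case by (auto intro: peq.sym)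
next
  case (trans u v w) then show ?case by (auto intro: peq.trans)
next
  case (rel l r u v) then show ?case
    using peq.rel[OF pres_rel_mono[OF rel(1) rel(4)] words_over_mono[OF rel(2) rel(4)] words_over_mono[OF rel(3) rel(4)]] by simp
next
  case (free i u v b) then show ?case
    using peq.free[of s i P u v b] words_over_mono by auto
qed

lemma peq_app_left: "peq P s u v \<Longrightarrow> x \<in> words_over P s \<Longrightarrow> peq P s (x @ u) (x @ v)"
proof (induct rule: peq.induct)
  case (refl w) then show ?case by (auto intro: peq.refl)
next
  case (sym u v) then show ?case by (auto intro: peq.sym)
next
  case (trans u v w) then show ?case by (auto intro: peq.trans)
next
  case (rel l r u v) then show ?case using peq.rel[of P s l r "x @ u" v] by auto
next
  case (free i u v b) then show ?case using peq.free[of s i P "x @ u" v b] by auto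
qed

lemma peq_app_right: "peq P s u v \<Longrightarrow> x \<in> words_over P s \<Longrightarrow> peq P s (u @ x) (v @ x)"
proof (induct rule: peq.induct)
  case (refl w) then show ?case by (auto intro: peq.refl)
next
  case (sym u v) then show ?case by (auto intro: peq.sym)
next
  case (trans u v w) then show ?case by (auto intro: peq.trans)
next
  case (rel l r u v) then show ?case using peq.rel[of P s l r u "v @ x"] by auto
next
  case (free i u v b) then show ?case using peq.free[of s i P u "v @ x" b] by auto
qed

lemma peq_app: "peq P s u u' \<Longrightarrow> peq P s v v' \<Longrightarrow> peq P s (u @ v) (u' @ v')"
proof -
  assume a: "peq P s u u'" "peq P s v v'"
  have 1: "peq P s (u @ v) (u' @ v)" using peq_app_right[OF a(1)] peq_words[OF a(2)] by blast
  have 2: "peq P s (u' @ v) (u' @ v')" using peq_app_left[OF a(2)] peq_words[OF a(1)] by blast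
  show ?thesis using peq.trans[OF 1 2] .
qed

lemma peq_inv: "w \<in> words_over P s \<Longrightarrow> peq P s (inv_word w @ w) []"
proof (induct w)
  case Nil then show ?case by (auto simp: inv_word_def intro: peq.refl)
next
  case (Cons x w)
  obtain i b where x: "x = (i, b)" by (cases x)
  have "inv_word (x # w) @ x # w = inv_word w @ [(i, \<not> b), (i, \<not> \<not> b)] @ w"
    by (simp add: inv_word_def x)
  moreover have "peq P s (inv_word w @ [(i, \<not> b), (i, \<not> \<not> b)] @ w) (inv_word w @ w)"
    using Cons by (intro peq.free) (auto simp: x)
  ultimately show ?case using Cons by (auto intro: peq.trans)
qed

lemma cls_eq: "u \<in> words_over P s \<Longrightarrow> v \<in> words_over P s \<Longrightarrow> cls P s u = cls P s v \<longleftrightarrow> peq P s u v"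
proof
  assume a: "u \<in> words_over P s" "v \<in> words_over P s" "cls P s u = cls P s v"
  have "v \<in> cls P s v" using a(2) by (simp add: cls_def peq.refl)
  then have "v \<in> cls P s u" using a(3) by simp
  then show "peq P s u v" by (simp add: cls_def)
next
  assume "peq P s u v"
  then show "cls P s u = cls P s v"
    unfolding cls_def by (auto intro: peq.trans peq.sym)
qed

lemma cls_peq: "peq P s u v \<Longrightarrow> cls P s u = cls P s v"
  by (meson cls_eq peq_words)

lemma Hgrp_mult: "u \<in> words_over P s \<Longrightarrow> v \<in> words_over P s \<Longrightarrow>
   cls P s u \<otimes>\<^bsub>Hgrp P s\<^esub> cls P s v = cls P s (u @ v)"
  unfolding Hgrp_def cls_def
  by (auto intro: peq.trans peq_app peq.refl)

lemma Hgrp_one: "\<one>\<^bsub>Hgrp P s\<^esub> = cls P s []" by (simp add: Hgrp_def)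
lemma Hgrp_carrier: "carrier (Hgrp P s) = cls P s ` words_over P s" by (simp add: Hgrp_def)

lemma Hgrp_group: "group (Hgrp P s)"
proof (rule groupI)
  fix x y assume "x \<in> carrier (Hgrp P s)" "y \<in> carrier (Hgrp P s)"
  then show "x \<otimes>\<^bsub>Hgrp P s\<^esub> y \<in> carrier (Hgrp P s)"
    by (auto simp: Hgrp_carrier Hgrp_mult)
next
  show "\<one>\<^bsub>Hgrp P s\<^esub> \<in> carrier (Hgrp P s)" by (auto simp: Hgrp_carrier Hgrp_one)
next
  fix x y z assume "x \<in> carrier (Hgrp P s)" "y \<in> carrier (Hgrp P s)" "z \<in> carrier (Hgrp P s)"
  then show "x \<otimes>\<^bsub>Hgrp P s\<^esub> y \<otimes>\<^bsub>Hgrp P s\<^esub> z = x \<otimes>\<^bsub>Hgrp P s\<^esub> (y \<otimes>\<^bsub>Hgrp P s\<^esub> z)"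
    by (auto simp: Hgrp_carrier Hgrp_mult)
next
  fix x assume "x \<in> carrier (Hgrp P s)"
  then show "\<one>\<^bsub>Hgrp P s\<^esub> \<otimes>\<^bsub>Hgrp P s\<^esub> x = x"
    by (auto simp: Hgrp_carrier Hgrp_mult Hgrp_one)
next
  fix x assume "x \<in> carrier (Hgrp P s)"
  then obtain w where w: "w \<in> words_over P s" "x = cls P s w" by (auto simp: Hgrp_carrier)
  then show "\<exists>y\<in>carrier (Hgrp P s). y \<otimes>\<^bsub>Hgrp P s\<^esub> x = \<one>\<^bsub>Hgrp P s\<^esub>"
  proof (intro bexI[of _ "cls P s (inv_word w)"])
    show "cls P s (inv_word w) \<in> carrier (Hgrp P s)" using w by (simp add: Hgrp_carrier)
    have "cls P s (inv_word w) \<otimes>\<^bsub>Hgrp P s\<^esub> cls P s w = cls P s (inv_word w @ w)"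
      using w by (simp add: Hgrp_mult)
    also have "\<dots> = cls P s []" using w by (intro cls_peq peq_inv)
    finally show "cls P s (inv_word w) \<otimes>\<^bsub>Hgrp P s\<^esub> x = \<one>\<^bsub>Hgrp P s\<^esub>"
      using w by (simp add: Hgrp_one)
  qed
qed

lemma cls_carrier: "w \<in> words_over P s \<Longrightarrow> cls P s w \<in> carrier (Hgrp P s)"
  by (simp add: Hgrp_carrier)

lemma cls_inv: assumes "w \<in> words_over P s" shows " inv\<^bsub>Hgrp P s\<^esub> (cls P s w) = cls P s (inv_word w)"
proof -
  have "cls P s (inv_word w) \<otimes>\<^bsub>Hgrp P s\<^esub> cls P s w = \<one>\<^bsub>Hgrp P s\<^esub>"
    using assms by (simp add: Hgrp_mult Hgrp_one cls_peq peq_inv)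
  then show ?thesis
    by (rule group.inv_equality[OF Hgrp_group]) (use assms in \<open>auto intro: cls_carrier\<close>)
qed

lemma cls_Cons: "x # w \<in> words_over P s \<Longrightarrow> cls P s (x # w) = cls P s [x] \<otimes>\<^bsub>Hgrp P s\<^esub> cls P s w"
proof -
  assume a: "x # w \<in> words_over P s"
  have "[x] \<in> words_over P s" "w \<in> words_over P s" using a by auto
  from Hgrp_mult[OF this] show ?thesis by simp
qed



definition acc_in :: "('a, 'b) monoid_scheme \<Rightarrow> 'a set \<Rightarrow> bool" where
  "acc_in G S \<longleftrightarrow> (\<forall>U::nat \<Rightarrow> 'a set. (\<forall>i. subgroup (U i) G \<and> U i \<subseteq> S \<and> U i \<subseteq> U (Suc i))
      \<longrightarrow> (\<exists>m. \<forall>i\<ge>m. U i = U m))"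

lemma int_sub_principal:
  fixes A :: "int set"
  assumes z: "0 \<in> A" and d: "\<And>x y. x \<in> A \<Longrightarrow> y \<in> A \<Longrightarrow> x - y \<in> A"
  shows "\<exists>d\<in>A. A = {k * d | k. True}"
proof -
  have neg: "x \<in> A \<Longrightarrow> - x \<in> A" for x using d[OF z, of x] by simp
  have add: "x \<in> A \<Longrightarrow> y \<in> A \<Longrightarrow> x + y \<in> A" for x y using d[of x "- y"] neg[of y] by simp
  have multn: "x \<in> A \<Longrightarrow> int k * x \<in> A" for x k
  proof (induct k)
    case 0 then show ?case using z by simp
  next
    case (Suc k)
    have e: "int (Suc k) * x = int k * x + x" by (simp add: algebra_simps)
    show ?case unfolding e by (rule add) (use Suc in auto)
  qed
  have mult: "x \<in> A \<Longrightarrow> k * x \<in> A" for x k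
  proof (cases "k \<ge> 0")
    case True assume "x \<in> A" then show ?thesis using multn[of x "nat k"] True by simp
  next
    case False assume "x \<in> A" then show ?thesis using neg[OF multn[of x "nat (-k)"]] False by simp
  qed
  show ?thesis
  proof (cases "\<exists>x\<in>A. x > 0")
    case False
    have "x = 0" if "x \<in> A" for x
    proof -
      have "\<not> x > 0" "\<not> - x > 0" using False that neg[OF that] by blast+
      then show ?thesis by linarith
    qed
    then have "A = {0}" using z by blast
    then show ?thesis by auto
  next
    case True
    define d where "d = (LEAST n::nat. n > 0 \<and> int n \<in> A)"
    obtain x where x: "x \<in> A" "x > 0" using True by auto
    have ex: "\<exists>n::nat. n > 0 \<and> int n \<in> A" using x by (intro exI[of _ "nat x"]) auto
    have dA: "d > 0" "int d \<in> A" using LeastI_ex[OF ex] by (auto simp: d_def)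
    have dmin: "n > 0 \<Longrightarrow> int n \<in> A \<Longrightarrow> d \<le> n" for n
      unfolding d_def by (rule Least_le) auto
    have "A = {k * int d | k. True}"
    proof
      show "{k * int d | k. True} \<subseteq> A" using mult[OF dA(2)] by auto
    next
      show "A \<subseteq> {k * int d | k. True}"
      proof
        fix a assume a: "a \<in> A"
        have e: "a mod int d = a - (a div int d) * int d" by (simp add: minus_div_mult_eq_mod)
        have "a - (a div int d) * int d \<in> A" using d[OF a mult[OF dA(2), of "a div int d"]] .
        then have m: "a mod int d \<in> A" unfolding e .
        have "a mod int d = 0"
        proof (rule ccontr)
          assume ne: "a mod int d \<noteq> 0"
          have "a mod int d \<ge> 0" using dA(1) by simp
          then have pos: "a mod int d > 0" using ne by linarith
          have lt: "a mod int d < int d" using dA(1) by simp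
          have "d \<le> nat (a mod int d)" using dmin[of "nat (a mod int d)"] m pos by simp
          then have "int d \<le> int (nat (a mod int d))" by (simp only: of_nat_le_iff)
          moreover have "int (nat (a mod int d)) = a mod int d" using pos by simp
          ultimately show False using lt by linarith
        qed
        then have "a = (a div int d) * int d" using div_mult_mod_eq[of a "int d"] by simp
        then show "a \<in> {k * int d | k. True}" by blast
      qed
    qed
    then show ?thesis using dA by blast
  qed
qed

lemma int_chain_stable:
  fixes E :: "nat \<Rightarrow> int set"
  assumes z: "\<And>i. 0 \<in> E i" and d: "\<And>i x y. x \<in> E i \<Longrightarrow> y \<in> E i \<Longrightarrow> x - y \<in> E i"
    and mono: "\<And>i. E i \<subseteq> E (Suc i)"
  shows "\<exists>m. \<forall>i\<ge>m. E i = E m"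
proof -
  have le: "i \<le> j \<Longrightarrow> E i \<subseteq> E j" for i j
    using lift_Suc_mono_le[of E, OF mono] by blast
  define A where "A = (\<Union>i. E i)"
  have A0: "0 \<in> A" using z by (auto simp: A_def)
  have Ad: "x \<in> A \<Longrightarrow> y \<in> A \<Longrightarrow> x - y \<in> A" for x y
  proof -
    assume "x \<in> A" "y \<in> A"
    then obtain i j where "x \<in> E i" "y \<in> E j" by (auto simp: A_def)
    moreover have "E i \<subseteq> E (max i j)" "E j \<subseteq> E (max i j)" using le by simp_all
    ultimately have "x \<in> E (max i j)" "y \<in> E (max i j)" by blast+
    then have "x - y \<in> E (max i j)" using d by blast
    then show ?thesis unfolding A_def by blast
  qed
  obtain g where g: "g \<in> A" "A = {k * g | k. True}" using int_sub_principal[of A, OF A0 Ad] by blast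
  obtain m where gm: "g \<in> E m" using g(1) unfolding A_def by blast
  have mul: "k * g \<in> E i" if "g \<in> E i" for i k
  proof -
    have neg: "x \<in> E i \<Longrightarrow> - x \<in> E i" for x using d[OF z, of x i] by simp
    have add: "x \<in> E i \<Longrightarrow> y \<in> E i \<Longrightarrow> x + y \<in> E i" for x y using d[of x i "- y"] neg[of y] by simp
    have multn: "int k * g \<in> E i" for k
    proof (induct k)
      case 0 then show ?case using z by simp
    next
      case (Suc k)
      have e: "int (Suc k) * g = int k * g + g" by (simp add: algebra_simps)
      show ?case unfolding e by (rule add) (use Suc that in auto)
    qed
    show ?thesis
    proof (cases "k \<ge> 0")
      case True then show ?thesis using multn[of "nat k"] by simp
    next
      case False then show ?thesis using neg[OF multn[of "nat (-k)"]] by simp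
    qed
  qed
  have "E i = A" if "i \<ge> m" for i
  proof
    show "E i \<subseteq> A" unfolding A_def by blast
    have "g \<in> E i" using le[OF that] gm by blast
    then show "A \<subseteq> E i" using g(2) mul[of i] by blast
  qed
  then show ?thesis by auto
qed

lemma acc_trivial:
  assumes "group G" shows "acc_in G {\<one>\<^bsub>G\<^esub>}"
  unfolding acc_in_def
proof (intro allI impI)
  fix U :: "nat \<Rightarrow> _" assume a: "\<forall>i. subgroup (U i) G \<and> U i \<subseteq> {\<one>\<^bsub>G\<^esub>} \<and> U i \<subseteq> U (Suc i)"
  have "U i = {\<one>\<^bsub>G\<^esub>}" for i using a subgroup.one_closed[of "U i" G] by blast
  then show "\<exists>m. \<forall>i\<ge>m. U i = U m" by auto
qed

lemma (in group) inv_cancel_l[simp]: "x \<in> carrier G \<Longrightarrow> y \<in> carrier G \<Longrightarrow> inv x \<otimes> (x \<otimes> y) = y"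
  by (simp add: m_assoc[symmetric])
lemma (in group) inv_cancel_r[simp]: "x \<in> carrier G \<Longrightarrow> y \<in> carrier G \<Longrightarrow> x \<otimes> (inv x \<otimes> y) = y"
  by (simp add: m_assoc[symmetric])

lemma (in group) acc_step:
  assumes K: "subgroup K G" and N: "subgroup N G" and NK: "N \<subseteq> K" and g: "g \<in> K"
    and dec: "\<And>x. x \<in> K \<Longrightarrow> \<exists>z::int. \<exists>n\<in>N. x = g [^] z \<otimes> n"
    and nrm: "\<And>z n. n \<in> N \<Longrightarrow> g [^] (z::int) \<otimes> n \<otimes> inv (g [^] z) \<in> N"
    and accN: "acc_in G N"
  shows "acc_in G K"
  unfolding acc_in_def
proof (intro allI impI)
  fix U :: "nat \<Rightarrow> _" assume a: "\<forall>i. subgroup (U i) G \<and> U i \<subseteq> K \<and> U i \<subseteq> U (Suc i)"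
  have Usub: "subgroup (U i) G" for i using a by blast
  have UK: "U i \<subseteq> K" for i using a by blast
  have Umono: "U i \<subseteq> U (Suc i)" for i using a by blast
  have le: "i \<le> j \<Longrightarrow> U i \<subseteq> U j" for i j
    using lift_Suc_mono_le[of U, OF Umono] by blast
  have gc: "g \<in> carrier G" using g K subgroup.subset by blast
  have Nc: "N \<subseteq> carrier G" using N subgroup.subset by blast
  have Uc: "U i \<subseteq> carrier G" for i using Usub subgroup.subset by blast
  have "\<forall>i. subgroup (U i \<inter> N) G \<and> U i \<inter> N \<subseteq> N \<and> U i \<inter> N \<subseteq> U (Suc i) \<inter> N"
  proof
    fix i
    have "subgroup (U i \<inter> N) G" by (rule subgroups_Inter_pair[OF Usub N])
    moreover have "U i \<inter> N \<subseteq> U (Suc i) \<inter> N" using Umono[of i] by blast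
    ultimately show "subgroup (U i \<inter> N) G \<and> U i \<inter> N \<subseteq> N \<and> U i \<inter> N \<subseteq> U (Suc i) \<inter> N" by blast
  qed
  then have "\<exists>m. \<forall>i\<ge>m. U i \<inter> N = U m \<inter> N"
    using accN unfolding acc_in_def by (rule mp[OF spec[of _ "\<lambda>i. U i \<inter> N"], rotated])
  then obtain m1 where m1: "\<And>i. i \<ge> m1 \<Longrightarrow> U i \<inter> N = U m1 \<inter> N" by blast
  define E where "E i = {z::int. \<exists>u\<in>U i. \<exists>n\<in>N. u = g [^] z \<otimes> n}" for i
  have "\<exists>m. \<forall>i\<ge>m. E i = E m"
  proof (rule int_chain_stable)
    fix i
    have "\<one> = g [^] (0::int) \<otimes> \<one>" by simp
    then show "0 \<in> E i" unfolding E_def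
      using subgroup.one_closed[OF Usub] subgroup.one_closed[OF N] by blast
  next
    fix i show "E i \<subseteq> E (Suc i)" unfolding E_def using Umono[of i] by blast
  next
    fix i x y assume "x \<in> E i" "y \<in> E i"
    then obtain u1 n1 u2 n2 where u: "u1 \<in> U i" "n1 \<in> N" "u1 = g [^] x \<otimes> n1"
       "u2 \<in> U i" "n2 \<in> N" "u2 = g [^] y \<otimes> n2" unfolding E_def by blast
    have c: "n1 \<in> carrier G" "n2 \<in> carrier G" using u Nc by auto
    define n' where "n' = g [^] y \<otimes> (n1 \<otimes> inv n2) \<otimes> inv (g [^] y)"
    have n': "n' \<in> N" unfolding n'_def
      by (rule nrm) (use u N in \<open>simp add: subgroup.m_closed subgroup.m_inv_closed\<close>)
    have "u1 \<otimes> inv u2 = g [^] (x - y) \<otimes> n'"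
      unfolding n'_def u(3) u(6) using c gc
      by (simp add: int_pow_diff inv_mult_group m_assoc)
    moreover have "u1 \<otimes> inv u2 \<in> U i" using u Usub[of i] by (simp add: subgroup.m_closed subgroup.m_inv_closed)
    ultimately show "x - y \<in> E i" unfolding E_def using n' by auto
  qed
  then obtain m2 where m2: "\<And>i. i \<ge> m2 \<Longrightarrow> E i = E m2" by blast
  define m where "m = max m1 m2"
  have "U i = U m" if im: "i \<ge> m" for i
  proof
    show "U m \<subseteq> U i" using le[OF im] .
  next
    show "U i \<subseteq> U m"
    proof
      fix v assume v: "v \<in> U i"
      have vK: "v \<in> K" using UK[of i] v by (rule subsetD)
      obtain z :: int and n where zn: "n \<in> N" "v = g [^] z \<otimes> n" using dec[OF vK] by blast
      have "z \<in> E i" unfolding E_def mem_Collect_eq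
        by (rule bexI[of _ v], rule bexI[of _ n]) (use zn v in simp_all)
      moreover have "m2 \<le> i" "m2 \<le> m" using im unfolding m_def by linarith+
      then have "E i = E m" using m2[of i] m2[of m] by simp
      ultimately have "z \<in> E m" by simp
      then obtain u n' where un: "u \<in> U m" "n' \<in> N" "u = g [^] z \<otimes> n'" unfolding E_def by blast
      have c: "n \<in> carrier G" "n' \<in> carrier G" using zn(1) un(2) Nc by (simp_all add: subset_iff)
      have uv: "inv u \<otimes> v = inv n' \<otimes> n" unfolding un(3) zn(2) using c gc
        by (simp add: inv_mult_group m_assoc)
      have "inv n' \<otimes> n \<in> N" using un zn N by (simp add: subgroup.m_closed subgroup.m_inv_closed)
      moreover have "u \<in> U i" using un(1) le[OF im] by (rule subsetD[rotated])
      moreover have "inv u \<otimes> v \<in> U i"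
        using \<open>u \<in> U i\<close> v Usub[of i] by (simp add: subgroup.m_closed subgroup.m_inv_closed)
      ultimately have "inv u \<otimes> v \<in> U i \<inter> N" using uv by simp
      also have "\<dots> = U m \<inter> N"
      proof -
        have "m1 \<le> i" "m1 \<le> m" using im unfolding m_def by linarith+
        then show ?thesis using m1[of i] m1[of m] by simp
      qed
      finally have "inv u \<otimes> v \<in> U m" by blast
      then have "u \<otimes> (inv u \<otimes> v) \<in> U m" using un Usub[of m] by (simp add: subgroup.m_closed)
      moreover have "u \<in> carrier G" "v \<in> carrier G" using un(1) Uc[of m] v Uc[of i] by (simp_all add: subset_iff)
      then have "u \<otimes> (inv u \<otimes> v) = v" by simp
      ultimately show "v \<in> U m" by simp
    qed
  qed
  then show "\<exists>m. \<forall>i\<ge>m. U i = U m" by blast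
qed


lemma (in group) conj_nat_closed:
  assumes N: "subgroup N G" and b: "b \<in> carrier G"
    and c: "\<And>n. n \<in> N \<Longrightarrow> b \<otimes> n \<otimes> inv b \<in> N"
  shows "n \<in> N \<Longrightarrow> b [^] (t::nat) \<otimes> n \<otimes> inv (b [^] t) \<in> N"
proof (induct t arbitrary: n)
  case 0 then show ?case using N subgroup.subset[OF N] by (auto simp: subset_iff)
next
  case (Suc t)
  have nc: "n \<in> carrier G" using Suc(2) subgroup.subset[OF N] by (simp add: subset_iff)
  have e: "b [^] Suc t \<otimes> n \<otimes> inv (b [^] Suc t) = b [^] t \<otimes> (b \<otimes> n \<otimes> inv b) \<otimes> inv (b [^] t)"
    using b nc by (simp only: nat_pow_Suc inv_mult_group[OF nat_pow_closed[OF b] b] m_assoc nat_pow_closed inv_closed m_closed)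
  show ?case unfolding e by (rule Suc(1)) (rule c[OF Suc(2)])
qed

lemma (in group) conj_int_closed:
  assumes N: "subgroup N G" and a: "a \<in> carrier G"
    and c1: "\<And>n. n \<in> N \<Longrightarrow> a \<otimes> n \<otimes> inv a \<in> N"
    and c2: "\<And>n. n \<in> N \<Longrightarrow> inv a \<otimes> n \<otimes> a \<in> N"
    and n: "n \<in> N"
  shows "a [^] (z::int) \<otimes> n \<otimes> inv (a [^] z) \<in> N"
proof (cases "z < 0")
  case True
  have e: "a [^] z = inv a [^] (nat (- z))"
    by (simp only: int_pow_def2[of G a z] if_P[OF True] nat_pow_inv[OF a])
  have c2': "inv a \<otimes> m \<otimes> inv (inv a) \<in> N" if "m \<in> N" for m
    unfolding inv_inv[OF a] by (rule c2[OF that])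
  show ?thesis unfolding e by (rule conj_nat_closed[OF N inv_closed[OF a] c2' n])
next
  case False
  have e: "a [^] z = a [^] (nat z)" by (simp only: int_pow_def2[of G a z] if_not_P[OF False])
  show ?thesis unfolding e by (rule conj_nat_closed[OF N a c1 n])
qed

lemma (in group) hopfian:
  assumes h: "f \<in> hom G G" and s: "f ` carrier G = carrier G" and acc: "acc_in G (carrier G)"
  shows "inj_on f (carrier G)"
proof -
  have fc: "x \<in> carrier G \<Longrightarrow> f x \<in> carrier G" for x using h by (simp add: hom_in_carrier)
  have fm: "x \<in> carrier G \<Longrightarrow> y \<in> carrier G \<Longrightarrow> f (x \<otimes> y) = f x \<otimes> f y" for x y
    using h by (simp add: hom_mult)
  have gh: "group_hom G G f" using h by (simp add: group_hom_def group_hom_axioms_def is_group)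
  have homp: "(f ^^ n) \<in> hom G G" for n
  proof (induct n)
    case 0 show ?case by (simp add: hom_def)
  next
    case (Suc n)
    have "(f ^^ Suc n) = f \<circ> (f ^^ n)" by simp
    then show ?case using Suc h unfolding hom_def by (auto simp: Pi_iff)
  qed
  have surjp: "(f ^^ n) ` carrier G = carrier G" for n
  proof (induct n)
    case 0 show ?case by simp
  next
    case (Suc n)
    have "(f ^^ Suc n) ` carrier G = f ` ((f ^^ n) ` carrier G)" by (simp add: image_comp)
    then show ?case using Suc s by simp
  qed
  define U where "U n = {x \<in> carrier G. (f ^^ n) x = \<one>}" for n
  have ghn: "group_hom G G (f ^^ n)" for n using homp by (simp add: group_hom_def group_hom_axioms_def is_group)
  have Usub: "subgroup (U n) G" for n
  proof (rule subgroupI)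
    show "U n \<subseteq> carrier G" by (auto simp: U_def)
    show "U n \<noteq> {}" using group_hom.hom_one[OF ghn[of n]] by (auto simp: U_def)
    fix a b assume "a \<in> U n" "b \<in> U n"
    then show "inv a \<in> U n" "a \<otimes> b \<in> U n"
      using group_hom.hom_inv[OF ghn[of n]] group_hom.hom_mult[OF ghn[of n]] by (auto simp: U_def)
  qed
  have Umono: "U n \<subseteq> U (Suc n)" for n
    using group_hom.hom_one[OF gh] by (auto simp: U_def)
  have "\<forall>i. subgroup (U i) G \<and> U i \<subseteq> carrier G \<and> U i \<subseteq> U (Suc i)"
    using Usub Umono subgroup.subset by blast
  then have "\<exists>m. \<forall>i\<ge>m. U i = U m"
    using acc unfolding acc_in_def by (rule mp[OF spec[of _ U], rotated])
  then obtain m where m: "\<And>i. i \<ge> m \<Longrightarrow> U i = U m" by blast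
  have ker: "x = \<one>" if x: "x \<in> carrier G" "f x = \<one>" for x
  proof -
    obtain y where y: "y \<in> carrier G" "x = (f ^^ m) y" using x(1) surjp[of m] by blast
    have "(f ^^ Suc m) y = \<one>" using y x by simp
    then have "y \<in> U (Suc m)" using y by (simp add: U_def)
    then have "y \<in> U m" using m[of "Suc m"] by simp
    then show ?thesis using y by (simp add: U_def)
  qed
  show ?thesis
  proof (rule inj_onI)
    fix x y assume xy: "x \<in> carrier G" "y \<in> carrier G" "f x = f y"
    have "f (x \<otimes> inv y) = \<one>" using xy group_hom.hom_mult[OF gh] group_hom.hom_inv[OF gh]
      by (simp add: fc)
    then have "x \<otimes> inv y = \<one>" using ker xy by simp
    then have "inv (inv y) = x" using xy by (intro inv_equality) simp_all
    then show "x = y" using xy by simp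
  qed
qed


lemma words_over_top: "words_over P (Suc (ngen P)) = {[]}"
proof -
  have "w = []" if "w \<in> words_over P (Suc (ngen P))" for w
    using that by (cases w) (auto simp: words_over_def)
  then show ?thesis by auto
qed

lemma cls_inv_letter: "2 \<le> j \<Longrightarrow> j \<le> ngen P \<Longrightarrow>
  cls P 2 [(j, False)] = inv\<^bsub>Hgrp P 2\<^esub> (cls P 2 [(j, True)])"
  using cls_inv[of "[(j, True)]" P 2] by (simp add: inv_word_def)

lemma cls_replicate: "s \<le> k \<Longrightarrow> k \<le> ngen P \<Longrightarrow>
  cls P s (replicate m (k, True)) = cls P s [(k, True)] [^]\<^bsub>Hgrp P s\<^esub> m"
proof (induct m)
  case 0 then show ?case by (simp add: Hgrp_one)
next
  case (Suc m)
  have w: "replicate m (k, True) \<in> words_over P s" "[(k, True)] \<in> words_over P s"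
    using Suc by (auto simp: words_over_def)
  have "cls P s (replicate (Suc m) (k, True)) = cls P s (replicate m (k, True) @ [(k, True)])"
    by (simp add: replicate_append_same)
  also have "\<dots> = cls P s (replicate m (k, True)) \<otimes>\<^bsub>Hgrp P s\<^esub> cls P s [(k, True)]"
    using Hgrp_mult[OF w] by simp
  finally show ?case using Suc by simp
qed

lemma GK_subgroup: "2 \<le> k \<Longrightarrow> subgroup (cls P 2 ` words_over P k) (Hgrp P 2)"
proof (rule group.subgroupI[OF Hgrp_group])
  assume k: "2 \<le> k"
  show "cls P 2 ` words_over P k \<subseteq> carrier (Hgrp P 2)"
    using k by (auto simp: Hgrp_carrier intro: words_over_mono)
  show "cls P 2 ` words_over P k \<noteq> {}" using words_over_Nil by blast
  fix a b assume ab: "a \<in> cls P 2 ` words_over P k" "b \<in> cls P 2 ` words_over P k"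
  then obtain u v where uv: "u \<in> words_over P k" "v \<in> words_over P k" "a = cls P 2 u" "b = cls P 2 v"
    by blast
  have uv2: "u \<in> words_over P 2" "v \<in> words_over P 2" using uv k words_over_mono by blast+
  show "inv\<^bsub>Hgrp P 2\<^esub> a \<in> cls P 2 ` words_over P k"
    using cls_inv[OF uv2(1)] uv by auto
  show "a \<otimes>\<^bsub>Hgrp P 2\<^esub> b \<in> cls P 2 ` words_over P k"
    using Hgrp_mult[OF uv2] uv by auto
qed

lemma GK_top: "cls P 2 ` words_over P (Suc (ngen P)) = {\<one>\<^bsub>Hgrp P 2\<^esub>}"
  by (simp add: words_over_top Hgrp_one)

lemma conj_gen_closed:
  assumes k: "2 \<le> k" and b: "b \<in> carrier (Hgrp P 2)"
    and gens: "\<And>j. Suc k \<le> j \<Longrightarrow> j \<le> ngen P \<Longrightarrow>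
       b \<otimes>\<^bsub>Hgrp P 2\<^esub> cls P 2 [(j, True)] \<otimes>\<^bsub>Hgrp P 2\<^esub> inv\<^bsub>Hgrp P 2\<^esub> b \<in> cls P 2 ` words_over P (Suc k)"
  shows "w \<in> words_over P (Suc k) \<Longrightarrow>
       b \<otimes>\<^bsub>Hgrp P 2\<^esub> cls P 2 w \<otimes>\<^bsub>Hgrp P 2\<^esub> inv\<^bsub>Hgrp P 2\<^esub> b \<in> cls P 2 ` words_over P (Suc k)"
proof (induct w)
  interpret H: group "Hgrp P 2" by (rule Hgrp_group)
  have N: "subgroup (cls P 2 ` words_over P (Suc k)) (Hgrp P 2)" using k by (intro GK_subgroup) simp
  case Nil
  have "b \<otimes>\<^bsub>Hgrp P 2\<^esub> cls P 2 [] \<otimes>\<^bsub>Hgrp P 2\<^esub> inv\<^bsub>Hgrp P 2\<^esub> b = \<one>\<^bsub>Hgrp P 2\<^esub>"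
    using b by (simp add: Hgrp_one[symmetric])
  then show ?case using subgroup.one_closed[OF N] by simp
next
  interpret H: group "Hgrp P 2" by (rule Hgrp_group)
  have N: "subgroup (cls P 2 ` words_over P (Suc k)) (Hgrp P 2)" using k by (intro GK_subgroup) simp
  case (Cons x w)
  obtain j s where x: "x = (j, s)" by (cases x)
  have jw: "Suc k \<le> j" "j \<le> ngen P" "w \<in> words_over P (Suc k)" using Cons(2) x by auto
  have w2: "w \<in> words_over P 2" using jw(3) k words_over_mono by (metis le_SucI)
  have x2: "[x] \<in> words_over P 2" using jw k x by (auto simp: words_over_def)
  have cw: "cls P 2 w \<in> carrier (Hgrp P 2)" using w2 by (rule cls_carrier)
  have cj: "cls P 2 [(j, True)] \<in> carrier (Hgrp P 2)" using jw k by (intro cls_carrier) (auto simp: words_over_def)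
  have ih: "b \<otimes>\<^bsub>Hgrp P 2\<^esub> cls P 2 w \<otimes>\<^bsub>Hgrp P 2\<^esub> inv\<^bsub>Hgrp P 2\<^esub> b \<in> cls P 2 ` words_over P (Suc k)"
    using Cons(1) jw(3) .
  have gx: "b \<otimes>\<^bsub>Hgrp P 2\<^esub> cls P 2 [x] \<otimes>\<^bsub>Hgrp P 2\<^esub> inv\<^bsub>Hgrp P 2\<^esub> b \<in> cls P 2 ` words_over P (Suc k)"
  proof (cases s)
    case True then show ?thesis using gens[OF jw(1,2)] x by simp
  next
    case False
    have "cls P 2 [x] = inv\<^bsub>Hgrp P 2\<^esub> (cls P 2 [(j, True)])"
      using x False cls_inv_letter[of j P] jw k by simp
    then have "b \<otimes>\<^bsub>Hgrp P 2\<^esub> cls P 2 [x] \<otimes>\<^bsub>Hgrp P 2\<^esub> inv\<^bsub>Hgrp P 2\<^esub> b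
       = inv\<^bsub>Hgrp P 2\<^esub> (b \<otimes>\<^bsub>Hgrp P 2\<^esub> cls P 2 [(j, True)] \<otimes>\<^bsub>Hgrp P 2\<^esub> inv\<^bsub>Hgrp P 2\<^esub> b)"
      using b cj by (simp add: H.inv_mult_group H.m_assoc)
    then show ?thesis using subgroup.m_inv_closed[OF N gens[OF jw(1,2)]] by simp
  qed
  have "cls P 2 (x # w) = cls P 2 [x] \<otimes>\<^bsub>Hgrp P 2\<^esub> cls P 2 w"
    using Hgrp_mult[OF x2 w2] by simp
  then have "b \<otimes>\<^bsub>Hgrp P 2\<^esub> cls P 2 (x # w) \<otimes>\<^bsub>Hgrp P 2\<^esub> inv\<^bsub>Hgrp P 2\<^esub> b =
     (b \<otimes>\<^bsub>Hgrp P 2\<^esub> cls P 2 [x] \<otimes>\<^bsub>Hgrp P 2\<^esub> inv\<^bsub>Hgrp P 2\<^esub> b) \<otimes>\<^bsub>Hgrp P 2\<^esub>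
     (b \<otimes>\<^bsub>Hgrp P 2\<^esub> cls P 2 w \<otimes>\<^bsub>Hgrp P 2\<^esub> inv\<^bsub>Hgrp P 2\<^esub> b)"
    using b cw cls_carrier[OF x2] by (simp add: H.m_assoc)
  then show ?case using subgroup.m_closed[OF N gx ih] by simp
qed

lemma rel_cls: "pres_rel P 2 l r \<Longrightarrow> cls P 2 l = cls P 2 r"
  using peq.rel[of P 2 l r "[]" "[]"] by (intro cls_peq) simp

lemma cls_two: "[a] \<in> words_over P s \<Longrightarrow> [b] \<in> words_over P s \<Longrightarrow>
  cls P s [a, b] = cls P s [a] \<otimes>\<^bsub>Hgrp P s\<^esub> cls P s [b]"
  using Hgrp_mult[of "[a]" P s "[b]"] by simp

lemma wf_order_pos:
  assumes wf: "pcp_wf P" and k: "2 \<le> k" "k \<le> ngen P" and m: "rel_order P k = Some m"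
  shows "0 < m"
proof -
  have "in_range P k (ex P 1 k)" using wf k unfolding pcp_wf_def by auto
  then show ?thesis using m by (auto simp: in_range_def)
qed

lemma GK_normal:
  assumes wf: "pcp_wf P" and k: "2 \<le> k" "k \<le> ngen P"
  shows "\<And>y. y \<in> cls P 2 ` words_over P (Suc k) \<Longrightarrow>
      inv\<^bsub>Hgrp P 2\<^esub> (cls P 2 [(k, True)]) \<otimes>\<^bsub>Hgrp P 2\<^esub> y \<otimes>\<^bsub>Hgrp P 2\<^esub> cls P 2 [(k, True)]
      \<in> cls P 2 ` words_over P (Suc k)"
    and "\<And>y. y \<in> cls P 2 ` words_over P (Suc k) \<Longrightarrow>
      cls P 2 [(k, True)] \<otimes>\<^bsub>Hgrp P 2\<^esub> y \<otimes>\<^bsub>Hgrp P 2\<^esub> inv\<^bsub>Hgrp P 2\<^esub> (cls P 2 [(k, True)])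
      \<in> cls P 2 ` words_over P (Suc k)"
proof -
  interpret H: group "Hgrp P 2" by (rule Hgrp_group)
  let ?N = "cls P 2 ` words_over P (Suc k)"
  let ?g = "cls P 2 [(k, True)]"
  have N: "subgroup ?N (Hgrp P 2)" using k by (intro GK_subgroup) simp
  have kw: "[(k, True)] \<in> words_over P 2" "[(k, False)] \<in> words_over P 2" using k by (auto simp: words_over_def)
  have gc: "?g \<in> carrier (Hgrp P 2)" using kw(1) by (rule cls_carrier)
  have Nc: "y \<in> ?N \<Longrightarrow> y \<in> carrier (Hgrp P 2)" for y using subgroup.mem_carrier[OF N] by blast
  have gvN: "cls P 2 (gvec P k v) \<in> ?N" for v using gvec_words by blast
  have gva: "inv\<^bsub>Hgrp P 2\<^esub> ?g \<otimes>\<^bsub>Hgrp P 2\<^esub> cls P 2 [(j, True)] \<otimes>\<^bsub>Hgrp P 2\<^esub> inv\<^bsub>Hgrp P 2\<^esub> (inv\<^bsub>Hgrp P 2\<^esub> ?g) \<in> ?N"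
    if j: "Suc k \<le> j" "j \<le> ngen P" for j
  proof -
    have jw: "[(j, True)] \<in> words_over P 2" using j k by (auto simp: words_over_def)
    have cj: "cls P 2 [(j, True)] \<in> carrier (Hgrp P 2)" using jw by (rule cls_carrier)
    have A: "gvec P k (ca P k j) \<in> words_over P 2" using gvec_words[of P k] k words_over_mono
      by (metis le_SucI)
    have "cls P 2 [(j, True), (k, True)] = cls P 2 ((k, True) # gvec P k (ca P k j))"
      using k j by (intro rel_cls pres_rel.conj) auto
    then have e: "cls P 2 [(j, True)] \<otimes>\<^bsub>Hgrp P 2\<^esub> ?g = ?g \<otimes>\<^bsub>Hgrp P 2\<^esub> cls P 2 (gvec P k (ca P k j))"
      using cls_two[OF jw kw(1)] Hgrp_mult[of "[(k, True)]" P 2 "gvec P k (ca P k j)"] kw A by simp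
    have "inv\<^bsub>Hgrp P 2\<^esub> ?g \<otimes>\<^bsub>Hgrp P 2\<^esub> cls P 2 [(j, True)] \<otimes>\<^bsub>Hgrp P 2\<^esub> inv\<^bsub>Hgrp P 2\<^esub> (inv\<^bsub>Hgrp P 2\<^esub> ?g)
       = inv\<^bsub>Hgrp P 2\<^esub> ?g \<otimes>\<^bsub>Hgrp P 2\<^esub> (cls P 2 [(j, True)] \<otimes>\<^bsub>Hgrp P 2\<^esub> ?g)"
      using gc cj by (simp add: H.m_assoc)
    also have "\<dots> = cls P 2 (gvec P k (ca P k j))" unfolding e using gc A cls_carrier by simp
    finally show ?thesis using gvN by simp
  qed
  have a_all: "inv\<^bsub>Hgrp P 2\<^esub> ?g \<otimes>\<^bsub>Hgrp P 2\<^esub> y \<otimes>\<^bsub>Hgrp P 2\<^esub> inv\<^bsub>Hgrp P 2\<^esub> (inv\<^bsub>Hgrp P 2\<^esub> ?g) \<in> ?N"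
    if y: "y \<in> ?N" for y
  proof -
    obtain w where w: "w \<in> words_over P (Suc k)" "y = cls P 2 w" using y by blast
    show ?thesis unfolding w(2)
      by (rule conj_gen_closed[OF k(1) H.inv_closed[OF gc] gva w(1)])
  qed
  show "\<And>y. y \<in> ?N \<Longrightarrow> inv\<^bsub>Hgrp P 2\<^esub> ?g \<otimes>\<^bsub>Hgrp P 2\<^esub> y \<otimes>\<^bsub>Hgrp P 2\<^esub> ?g \<in> ?N"
    using a_all gc by simp
  show "\<And>y. y \<in> ?N \<Longrightarrow> ?g \<otimes>\<^bsub>Hgrp P 2\<^esub> y \<otimes>\<^bsub>Hgrp P 2\<^esub> inv\<^bsub>Hgrp P 2\<^esub> ?g \<in> ?N"
  proof (cases "rel_order P k")
    case None
    have gvb: "?g \<otimes>\<^bsub>Hgrp P 2\<^esub> cls P 2 [(j, True)] \<otimes>\<^bsub>Hgrp P 2\<^esub> inv\<^bsub>Hgrp P 2\<^esub> ?g \<in> ?N"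
      if j: "Suc k \<le> j" "j \<le> ngen P" for j
    proof -
      have jw: "[(j, True)] \<in> words_over P 2" using j k by (auto simp: words_over_def)
      have cj: "cls P 2 [(j, True)] \<in> carrier (Hgrp P 2)" using jw by (rule cls_carrier)
      have B: "gvec P k (cb P k j) \<in> words_over P 2" using gvec_words[of P k] k words_over_mono
        by (metis le_SucI)
      have "cls P 2 [(j, True), (k, False)] = cls P 2 ((k, False) # gvec P k (cb P k j))"
        using k j None by (intro rel_cls pres_rel.conj_inv) auto
      then have e: "cls P 2 [(j, True)] \<otimes>\<^bsub>Hgrp P 2\<^esub> inv\<^bsub>Hgrp P 2\<^esub> ?g
          = inv\<^bsub>Hgrp P 2\<^esub> ?g \<otimes>\<^bsub>Hgrp P 2\<^esub> cls P 2 (gvec P k (cb P k j))"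
        using cls_two[OF jw kw(2)] Hgrp_mult[of "[(k, False)]" P 2 "gvec P k (cb P k j)"] kw B
          cls_inv_letter[of k P] k by simp
      have "?g \<otimes>\<^bsub>Hgrp P 2\<^esub> cls P 2 [(j, True)] \<otimes>\<^bsub>Hgrp P 2\<^esub> inv\<^bsub>Hgrp P 2\<^esub> ?g
         = ?g \<otimes>\<^bsub>Hgrp P 2\<^esub> (cls P 2 [(j, True)] \<otimes>\<^bsub>Hgrp P 2\<^esub> inv\<^bsub>Hgrp P 2\<^esub> ?g)"
        using gc cj by (simp add: H.m_assoc)
      also have "\<dots> = cls P 2 (gvec P k (cb P k j))" unfolding e using gc B cls_carrier by simp
      finally show ?thesis using gvN by simp
    qed
    fix y assume y: "y \<in> ?N"
    obtain w where w: "w \<in> words_over P (Suc k)" "y = cls P 2 w" using y by blast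
    show "?g \<otimes>\<^bsub>Hgrp P 2\<^esub> y \<otimes>\<^bsub>Hgrp P 2\<^esub> inv\<^bsub>Hgrp P 2\<^esub> ?g \<in> ?N" unfolding w(2)
      by (rule conj_gen_closed[OF k(1) gc gvb w(1)])
  next
    case (Some m)
    have m0: "0 < m" using wf_order_pos[OF wf k Some] .
    have E: "?g [^]\<^bsub>Hgrp P 2\<^esub> m = cls P 2 (gvec P k (ex P k))"
      using cls_replicate[of 2 k P m] k rel_cls[OF pres_rel.power[of 2 k P m]] Some by simp
    have EN: "?g [^]\<^bsub>Hgrp P 2\<^esub> m \<in> ?N" unfolding E using gvN .
    fix y assume y: "y \<in> ?N"
    define p where "p = ?g [^]\<^bsub>Hgrp P 2\<^esub> (m - 1)"
    have pc: "p \<in> carrier (Hgrp P 2)" using gc by (simp add: p_def)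
    have gm: "?g [^]\<^bsub>Hgrp P 2\<^esub> m = p \<otimes>\<^bsub>Hgrp P 2\<^esub> ?g"
      using m0 by (simp add: p_def flip: H.nat_pow_Suc) 
    have inner: "?g [^]\<^bsub>Hgrp P 2\<^esub> m \<otimes>\<^bsub>Hgrp P 2\<^esub> y \<otimes>\<^bsub>Hgrp P 2\<^esub> inv\<^bsub>Hgrp P 2\<^esub> (?g [^]\<^bsub>Hgrp P 2\<^esub> m) \<in> ?N"
      using EN y N by (simp add: subgroup.m_closed subgroup.m_inv_closed)
    have "(inv\<^bsub>Hgrp P 2\<^esub> ?g) [^]\<^bsub>Hgrp P 2\<^esub> (m - 1) \<otimes>\<^bsub>Hgrp P 2\<^esub>
           (?g [^]\<^bsub>Hgrp P 2\<^esub> m \<otimes>\<^bsub>Hgrp P 2\<^esub> y \<otimes>\<^bsub>Hgrp P 2\<^esub> inv\<^bsub>Hgrp P 2\<^esub> (?g [^]\<^bsub>Hgrp P 2\<^esub> m))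
           \<otimes>\<^bsub>Hgrp P 2\<^esub> inv\<^bsub>Hgrp P 2\<^esub> ((inv\<^bsub>Hgrp P 2\<^esub> ?g) [^]\<^bsub>Hgrp P 2\<^esub> (m - 1)) \<in> ?N"
      by (rule H.conj_nat_closed[OF N H.inv_closed[OF gc] a_all inner])
    moreover have "(inv\<^bsub>Hgrp P 2\<^esub> ?g) [^]\<^bsub>Hgrp P 2\<^esub> (m - 1) = inv\<^bsub>Hgrp P 2\<^esub> p"
      using gc by (simp add: p_def H.nat_pow_inv)
    ultimately have "inv\<^bsub>Hgrp P 2\<^esub> p \<otimes>\<^bsub>Hgrp P 2\<^esub>
           (p \<otimes>\<^bsub>Hgrp P 2\<^esub> ?g \<otimes>\<^bsub>Hgrp P 2\<^esub> y \<otimes>\<^bsub>Hgrp P 2\<^esub> inv\<^bsub>Hgrp P 2\<^esub> (p \<otimes>\<^bsub>Hgrp P 2\<^esub> ?g))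
           \<otimes>\<^bsub>Hgrp P 2\<^esub> inv\<^bsub>Hgrp P 2\<^esub> (inv\<^bsub>Hgrp P 2\<^esub> p) \<in> ?N"
      by (simp only: gm)
    moreover have "inv\<^bsub>Hgrp P 2\<^esub> p \<otimes>\<^bsub>Hgrp P 2\<^esub>
           (p \<otimes>\<^bsub>Hgrp P 2\<^esub> ?g \<otimes>\<^bsub>Hgrp P 2\<^esub> y \<otimes>\<^bsub>Hgrp P 2\<^esub> inv\<^bsub>Hgrp P 2\<^esub> (p \<otimes>\<^bsub>Hgrp P 2\<^esub> ?g))
           \<otimes>\<^bsub>Hgrp P 2\<^esub> inv\<^bsub>Hgrp P 2\<^esub> (inv\<^bsub>Hgrp P 2\<^esub> p) = ?g \<otimes>\<^bsub>Hgrp P 2\<^esub> y \<otimes>\<^bsub>Hgrp P 2\<^esub> inv\<^bsub>Hgrp P 2\<^esub> ?g"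
      using pc gc Nc[OF y] by (simp add: H.m_assoc H.inv_mult_group)
    ultimately show "?g \<otimes>\<^bsub>Hgrp P 2\<^esub> y \<otimes>\<^bsub>Hgrp P 2\<^esub> inv\<^bsub>Hgrp P 2\<^esub> ?g \<in> ?N" by simp
  qed
qed

lemma GK_dec:
  assumes wf: "pcp_wf P" and k: "2 \<le> k" "k \<le> ngen P"
  shows "w \<in> words_over P k \<Longrightarrow> \<exists>z::int. \<exists>n\<in>cls P 2 ` words_over P (Suc k).
            cls P 2 w = cls P 2 [(k, True)] [^]\<^bsub>Hgrp P 2\<^esub> z \<otimes>\<^bsub>Hgrp P 2\<^esub> n"
proof (induct w)
  interpret H: group "Hgrp P 2" by (rule Hgrp_group)
  case Nil
  have "cls P 2 [(k, True)] [^]\<^bsub>Hgrp P 2\<^esub> (0::int) \<otimes>\<^bsub>Hgrp P 2\<^esub> cls P 2 [] = cls P 2 []"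
    unfolding int_pow_0 Hgrp_one[symmetric] by (rule H.l_one[OF H.one_closed])
  moreover have "cls P 2 [] \<in> cls P 2 ` words_over P (Suc k)" using words_over_Nil by (rule imageI)
  ultimately show ?case by (intro exI[of _ "0::int"] bexI[of _ "cls P 2 []"]) simp_all
next
  interpret H: group "Hgrp P 2" by (rule Hgrp_group)
  let ?N = "cls P 2 ` words_over P (Suc k)"
  let ?g = "cls P 2 [(k, True)]"
  have N: "subgroup ?N (Hgrp P 2)" using k by (intro GK_subgroup) simp
  have Nc: "y \<in> ?N \<Longrightarrow> y \<in> carrier (Hgrp P 2)" for y using subgroup.mem_carrier[OF N] by blast
  have kw: "[(k, True)] \<in> words_over P 2" using k by (auto simp: words_over_def)
  have gc: "?g \<in> carrier (Hgrp P 2)" using kw by (rule cls_carrier)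
  case (Cons x w)
  obtain j s where x: "x = (j, s)" by (cases x)
  have jw: "k \<le> j" "j \<le> ngen P" "w \<in> words_over P k" using Cons(2) unfolding x by simp_all
  obtain z :: int and n where zn: "n \<in> ?N" "cls P 2 w = ?g [^]\<^bsub>Hgrp P 2\<^esub> z \<otimes>\<^bsub>Hgrp P 2\<^esub> n"
    using Cons(1)[OF jw(3)] by blast
  have w2: "w \<in> words_over P 2" using words_over_mono[OF jw(3) k(1)] .
  have x2: "[x] \<in> words_over P 2" using jw k unfolding x by simp
  have cx: "cls P 2 [x] \<in> carrier (Hgrp P 2)" using x2 by (rule cls_carrier)
  have e: "cls P 2 (x # w) = cls P 2 [x] \<otimes>\<^bsub>Hgrp P 2\<^esub> (?g [^]\<^bsub>Hgrp P 2\<^esub> z \<otimes>\<^bsub>Hgrp P 2\<^esub> n)"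
    using Hgrp_mult[OF x2 w2] unfolding zn(2) by simp
  show ?case
  proof (cases "j = k")
    case True
    define d :: int where "d = (if s then 1 else -1)"
    have "cls P 2 [x] = ?g [^]\<^bsub>Hgrp P 2\<^esub> d"
    proof (cases s)
      case True then show ?thesis using x \<open>j = k\<close> gc by (simp add: d_def)
    next
      case False then show ?thesis using x \<open>j = k\<close> gc cls_inv_letter[of k P] k
        by (simp add: d_def H.int_pow_neg)
    qed
    then have "cls P 2 (x # w) = ?g [^]\<^bsub>Hgrp P 2\<^esub> (d + z) \<otimes>\<^bsub>Hgrp P 2\<^esub> n"
      unfolding e using gc Nc[OF zn(1)] by (simp add: H.int_pow_mult H.m_assoc)
    then show ?thesis using zn(1) by (intro exI[of _ "d + z"] bexI[of _ n])
  next
    case False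
    then have "[x] \<in> words_over P (Suc k)" using jw unfolding x by simp
    then have xN: "cls P 2 [x] \<in> ?N" by (rule imageI)
    define n' where "n' = ?g [^]\<^bsub>Hgrp P 2\<^esub> (- z) \<otimes>\<^bsub>Hgrp P 2\<^esub> cls P 2 [x] \<otimes>\<^bsub>Hgrp P 2\<^esub>
        inv\<^bsub>Hgrp P 2\<^esub> (?g [^]\<^bsub>Hgrp P 2\<^esub> (- z))"
    have n'N: "n' \<in> ?N" unfolding n'_def
      by (rule H.conj_int_closed[OF N gc GK_normal(2)[OF wf k] GK_normal(1)[OF wf k] xN])
    have "cls P 2 (x # w) = ?g [^]\<^bsub>Hgrp P 2\<^esub> z \<otimes>\<^bsub>Hgrp P 2\<^esub> (n' \<otimes>\<^bsub>Hgrp P 2\<^esub> n)"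
      unfolding e n'_def using gc Nc[OF zn(1)] cx
      by (simp add: H.int_pow_neg H.m_assoc)
    moreover have "n' \<otimes>\<^bsub>Hgrp P 2\<^esub> n \<in> ?N" using n'N zn(1) N by (simp add: subgroup.m_closed)
    ultimately show ?thesis by (intro exI[of _ z] bexI[of _ "n' \<otimes>\<^bsub>Hgrp P 2\<^esub> n"])
  qed
qed

lemma GK_acc:
  assumes wf: "pcp_wf P"
  shows "2 \<le> k \<Longrightarrow> k \<le> Suc (ngen P) \<Longrightarrow> acc_in (Hgrp P 2) (cls P 2 ` words_over P k)"
proof (induct "Suc (ngen P) - k" arbitrary: k)
  case 0
  then have "k = Suc (ngen P)" by simp
  then show ?case using acc_trivial[OF Hgrp_group, of P 2] GK_top[of P] by simp
next
  case (Suc d)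
  interpret H: group "Hgrp P 2" by (rule Hgrp_group)
  have k: "2 \<le> k" "k \<le> ngen P" using Suc(2,3,4) by linarith+
  have accN: "acc_in (Hgrp P 2) (cls P 2 ` words_over P (Suc k))"
  proof (rule Suc(1))
    show "d = Suc (ngen P) - Suc k" using Suc(2) by linarith
    show "2 \<le> Suc k" "Suc k \<le> Suc (ngen P)" using k by linarith+
  qed
  have kw: "[(k, True)] \<in> words_over P k" using k by simp
  let ?K = "cls P 2 ` words_over P k"
  let ?N = "cls P 2 ` words_over P (Suc k)"
  let ?g = "cls P 2 [(k, True)]"
  have K: "subgroup ?K (Hgrp P 2)" using GK_subgroup[OF k(1)] .
  have N: "subgroup ?N (Hgrp P 2)" using k by (intro GK_subgroup) simp
  have "w \<in> words_over P (Suc k) \<Longrightarrow> w \<in> words_over P k" for w by (erule words_over_mono) simp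
  then have NK: "?N \<subseteq> ?K" by (intro image_mono subsetI)
  have gK: "?g \<in> ?K" using kw by (rule imageI)
  have gc: "?g \<in> carrier (Hgrp P 2)" using subgroup.mem_carrier[OF K gK] .
  have dec: "\<exists>z::int. \<exists>n\<in>?N. x = ?g [^]\<^bsub>Hgrp P 2\<^esub> z \<otimes>\<^bsub>Hgrp P 2\<^esub> n" if xK: "x \<in> ?K" for x
  proof -
    obtain w where w: "w \<in> words_over P k" "x = cls P 2 w" using xK by blast
    show ?thesis unfolding w(2) by (rule GK_dec[OF wf k w(1)])
  qed
  have nrm: "?g [^]\<^bsub>Hgrp P 2\<^esub> z \<otimes>\<^bsub>Hgrp P 2\<^esub> n \<otimes>\<^bsub>Hgrp P 2\<^esub>
        inv\<^bsub>Hgrp P 2\<^esub> (?g [^]\<^bsub>Hgrp P 2\<^esub> z) \<in> ?N" if "n \<in> ?N" for z :: int and n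
    by (rule H.conj_int_closed[OF N gc GK_normal(2)[OF wf k] GK_normal(1)[OF wf k] that])
  show ?case by (rule H.acc_step[OF K N NK gK dec nrm accN])
qed

lemma coll_rule_props:
  assumes "coll_rule P C i k l r"
  shows "1 \<le> i \<and> i \<le> ngen P \<and> (\<exists>b. (i, b) \<in> set l) \<and> l \<in> words_over P i \<and> r \<in> words_over P i \<and> l \<noteq> []"
  using assms
proof (cases rule: coll_rule.cases)
  case (power m)
  then show ?thesis using words_over_mono[OF gvec_words[of P i "ex P i"], of i]
    by (auto simp: words_over_def)
next
  case (conj_a j)
  then show ?thesis using words_over_mono[OF gvec_words[of P i "ca P i j"], of i] by auto
next
  case (conj_b j)
  then show ?thesis using words_over_mono[OF gvec_words[of P i "cb P i j"], of i] by auto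
next
  case (conj_c j)
  then show ?thesis using words_over_mono[OF gvec_words[of P i "cc C i j"], of i] by auto
next
  case (conj_d j)
  then show ?thesis using words_over_mono[OF gvec_words[of P i "cd C i j"], of i] by auto
next
  case (inverse m)
  then show ?thesis using words_over_mono[OF gvec_words[of P i "cf C i"], of i]
    by (auto simp: words_over_def)
next
  case (free b)
  then show ?thesis by auto
qed

lemma aux_cls:
  assumes "peq P (Suc i) (gvec P i v) (inv_word (gvec P i u))" "1 \<le> i"
  shows "cls P 2 (gvec P i v) = inv\<^bsub>Hgrp P 2\<^esub> (cls P 2 (gvec P i u))"
proof -
  have u: "gvec P i u \<in> words_over P 2" using words_over_mono[OF gvec_words[of P i u]] assms(2) by simp
  have "peq P 2 (gvec P i v) (inv_word (gvec P i u))" using peq_mono[OF assms(1)] assms(2) by simp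
  then show ?thesis using cls_inv[OF u] cls_peq by simp
qed

lemma (in group) conj_inv_lemma:
  "x \<in> carrier G \<Longrightarrow> y \<in> carrier G \<Longrightarrow> a \<in> carrier G \<Longrightarrow> x \<otimes> y = y \<otimes> a \<Longrightarrow> inv x \<otimes> y = y \<otimes> inv a"
proof -
  assume c: "x \<in> carrier G" "y \<in> carrier G" "a \<in> carrier G" and e: "x \<otimes> y = y \<otimes> a"
  have "a = inv y \<otimes> (x \<otimes> y)" using c e by simp
  then have "inv a = inv y \<otimes> inv x \<otimes> y" using c by (simp add: inv_mult_group m_assoc)
  then show ?thesis using c by (simp add: m_assoc)
qed

lemma coll_rule_sound:
  assumes r: "coll_rule P C i k l r" and i: "2 \<le> i" and wf: "pcp_wf P" and aux: "aux_ok P C"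
  shows "cls P 2 l = cls P 2 r"
  using r
proof (cases rule: coll_rule.cases)
  case (power m)
  show ?thesis unfolding power(2,3) by (rule rel_cls[OF pres_rel.power]) (use power i in auto)
next
  case (conj_a j)
  show ?thesis unfolding conj_a(2,3) by (rule rel_cls[OF pres_rel.conj]) (use conj_a i in auto)
next
  case (conj_b j)
  show ?thesis unfolding conj_b(2,3) by (rule rel_cls[OF pres_rel.conj_inv]) (use conj_b i in auto)
next
  interpret H: group "Hgrp P 2" by (rule Hgrp_group)
  case (conj_c j)
  have jw: "[(j, True)] \<in> words_over P 2" "[(j, False)] \<in> words_over P 2"
    "[(i, True)] \<in> words_over P 2" using conj_c i by simp_all
  have A: "gvec P i (ca P i j) \<in> words_over P 2" using words_over_mono[OF gvec_words[of P i]] i by simp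
  have cA: "cls P 2 (gvec P i (ca P i j)) \<in> carrier (Hgrp P 2)" using A by (rule cls_carrier)
  have "cls P 2 [(j, True), (i, True)] = cls P 2 ((i, True) # gvec P i (ca P i j))"
    using conj_c i by (intro rel_cls pres_rel.conj) auto
  then have e: "cls P 2 [(j, True)] \<otimes>\<^bsub>Hgrp P 2\<^esub> cls P 2 [(i, True)]
      = cls P 2 [(i, True)] \<otimes>\<^bsub>Hgrp P 2\<^esub> cls P 2 (gvec P i (ca P i j))"
    using cls_two[OF jw(1) jw(3)] Hgrp_mult[OF jw(3) A] by simp
  have c: "cls P 2 (gvec P i (cc C i j)) = inv\<^bsub>Hgrp P 2\<^esub> (cls P 2 (gvec P i (ca P i j)))"
    using aux conj_c unfolding aux_ok_def by (intro aux_cls) auto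
  have C': "gvec P i (cc C i j) \<in> words_over P 2" using words_over_mono[OF gvec_words[of P i]] i by simp
  have "cls P 2 l = inv\<^bsub>Hgrp P 2\<^esub> (cls P 2 [(j, True)]) \<otimes>\<^bsub>Hgrp P 2\<^esub> cls P 2 [(i, True)]"
    using conj_c cls_two[OF jw(2) jw(3)] cls_inv_letter[of j P] i by simp
  also have "\<dots> = cls P 2 [(i, True)] \<otimes>\<^bsub>Hgrp P 2\<^esub> inv\<^bsub>Hgrp P 2\<^esub> (cls P 2 (gvec P i (ca P i j)))"
    by (rule H.conj_inv_lemma[OF cls_carrier[OF jw(1)] cls_carrier[OF jw(3)] cA e])
  also have "\<dots> = cls P 2 r" using conj_c Hgrp_mult[OF jw(3) C'] c by simp
  finally show ?thesis .
next
  interpret H: group "Hgrp P 2" by (rule Hgrp_group)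
  case (conj_d j)
  have jw: "[(j, True)] \<in> words_over P 2" "[(j, False)] \<in> words_over P 2"
    "[(i, False)] \<in> words_over P 2" using conj_d i by simp_all
  have B: "gvec P i (cb P i j) \<in> words_over P 2" using words_over_mono[OF gvec_words[of P i]] i by simp
  have cB: "cls P 2 (gvec P i (cb P i j)) \<in> carrier (Hgrp P 2)" using B by (rule cls_carrier)
  have "cls P 2 [(j, True), (i, False)] = cls P 2 ((i, False) # gvec P i (cb P i j))"
    using conj_d i by (intro rel_cls pres_rel.conj_inv) auto
  then have e: "cls P 2 [(j, True)] \<otimes>\<^bsub>Hgrp P 2\<^esub> cls P 2 [(i, False)]
      = cls P 2 [(i, False)] \<otimes>\<^bsub>Hgrp P 2\<^esub> cls P 2 (gvec P i (cb P i j))"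
    using cls_two[OF jw(1) jw(3)] Hgrp_mult[OF jw(3) B] by simp
  have d: "cls P 2 (gvec P i (cd C i j)) = inv\<^bsub>Hgrp P 2\<^esub> (cls P 2 (gvec P i (cb P i j)))"
    using aux conj_d unfolding aux_ok_def by (intro aux_cls) auto
  have D': "gvec P i (cd C i j) \<in> words_over P 2" using words_over_mono[OF gvec_words[of P i]] i by simp
  have "cls P 2 l = inv\<^bsub>Hgrp P 2\<^esub> (cls P 2 [(j, True)]) \<otimes>\<^bsub>Hgrp P 2\<^esub> cls P 2 [(i, False)]"
    using conj_d cls_two[OF jw(2) jw(3)] cls_inv_letter[of j P] i by simp
  also have "\<dots> = cls P 2 [(i, False)] \<otimes>\<^bsub>Hgrp P 2\<^esub> inv\<^bsub>Hgrp P 2\<^esub> (cls P 2 (gvec P i (cb P i j)))"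
    by (rule H.conj_inv_lemma[OF cls_carrier[OF jw(1)] cls_carrier[OF jw(3)] cB e])
  also have "\<dots> = cls P 2 r" using conj_d Hgrp_mult[OF jw(3) D'] d by simp
  finally show ?thesis .
next
  interpret H: group "Hgrp P 2" by (rule Hgrp_group)
  case (inverse m)
  have m0: "0 < m" using wf_order_pos[OF wf i] inverse by simp
  have iw: "[(i, True)] \<in> words_over P 2" using inverse i by simp
  let ?g = "cls P 2 [(i, True)]"
  have gc: "?g \<in> carrier (Hgrp P 2)" using iw by (rule cls_carrier)
  have E: "?g [^]\<^bsub>Hgrp P 2\<^esub> m = cls P 2 (gvec P i (ex P i))"
    using cls_replicate[of 2 i P m] i inverse rel_cls[OF pres_rel.power[of 2 i P m]] by simp
  have f: "cls P 2 (gvec P i (cf C i)) = inv\<^bsub>Hgrp P 2\<^esub> (cls P 2 (gvec P i (ex P i)))"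
    using aux inverse unfolding aux_ok_def by (intro aux_cls) auto
  have F': "gvec P i (cf C i) \<in> words_over P 2" using words_over_mono[OF gvec_words[of P i]] i by simp
  have R: "replicate (m - 1) (i, True) \<in> words_over P 2" using inverse i by (auto simp: words_over_def)
  have "cls P 2 r = ?g [^]\<^bsub>Hgrp P 2\<^esub> (m - 1) \<otimes>\<^bsub>Hgrp P 2\<^esub> inv\<^bsub>Hgrp P 2\<^esub> (?g [^]\<^bsub>Hgrp P 2\<^esub> m)"
    using inverse Hgrp_mult[OF R F'] f E cls_replicate[of 2 i P "m - 1"] i by simp
  also have "?g [^]\<^bsub>Hgrp P 2\<^esub> m = ?g \<otimes>\<^bsub>Hgrp P 2\<^esub> ?g [^]\<^bsub>Hgrp P 2\<^esub> (m - 1)"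
    using m0 H.nat_pow_Suc2[OF gc, of "m - 1"] by simp
  also have "?g [^]\<^bsub>Hgrp P 2\<^esub> (m - 1) \<otimes>\<^bsub>Hgrp P 2\<^esub>
      inv\<^bsub>Hgrp P 2\<^esub> (?g \<otimes>\<^bsub>Hgrp P 2\<^esub> ?g [^]\<^bsub>Hgrp P 2\<^esub> (m - 1)) = inv\<^bsub>Hgrp P 2\<^esub> ?g"
    using gc by (simp add: H.inv_mult_group)
  also have "\<dots> = cls P 2 l" using inverse cls_inv_letter[of i P] i by simp
  finally show ?thesis by simp
next
  case (free b)
  have w: "[(i, \<not> b)] \<in> words_over P 2" using free i by simp
  have "peq P 2 ([] @ [(i, b), (i, \<not> b)] @ []) ([] @ [])"
    using free i by (intro peq.free) auto
  then show ?thesis using free by (simp add: cls_peq)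
qed

lemma occ_split:
  assumes "coll_occ P C w i k p l r"
  shows "w = take p w @ l @ drop (p + length l) w"
proof -
  have "w = take p w @ drop p w" by simp
  also have "drop p w = take (length l) (drop p w) @ drop (length l) (drop p w)"
    by (rule append_take_drop_id[symmetric])
  also have "take (length l) (drop p w) = l" using assms by (simp add: coll_occ_def)
  finally show ?thesis by (simp add: add.commute)
qed

lemma coll_step_sound:
  assumes st: "coll_step P C w w'" and w: "w \<in> words_over P 2" and wf: "pcp_wf P" and aux: "aux_ok P C"
  shows "w' \<in> words_over P 2 \<and> cls P 2 w = cls P 2 w'"
proof -
  obtain i k p l r where occ: "coll_occ P C w i k p l r" and w': "w' = take p w @ r @ drop (p + length l) w"
    using st unfolding coll_step_def by blast
  have rl: "coll_rule P C i k l r" using occ by (simp add: coll_occ_def)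
  have sp: "w = take p w @ l @ drop (p + length l) w" using occ_split[OF occ] .
  have parts: "take p w \<in> words_over P 2" "l \<in> words_over P 2" "drop (p + length l) w \<in> words_over P 2"
    using w sp by (metis words_over_append)+
  obtain b where b: "(i, b) \<in> set l" using coll_rule_props[OF rl] by blast
  have "2 \<le> i" using parts(2) b by (auto simp: words_over_def)
  then have eq: "cls P 2 l = cls P 2 r" using coll_rule_sound[OF rl _ wf aux] by simp
  have r1: "r \<in> words_over P i" using coll_rule_props[OF rl] by blast
  have r2: "r \<in> words_over P 2" using words_over_mono[OF r1 \<open>2 \<le> i\<close>] .
  have "cls P 2 w = cls P 2 (take p w) \<otimes>\<^bsub>Hgrp P 2\<^esub> (cls P 2 l \<otimes>\<^bsub>Hgrp P 2\<^esub> cls P 2 (drop (p + length l) w))"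
    using Hgrp_mult[OF parts(2,3)] Hgrp_mult[of "take p w" P 2 "l @ drop (p + length l) w"] parts sp
    by simp
  also have "\<dots> = cls P 2 w'"
    unfolding eq w' using Hgrp_mult[OF r2 parts(3)] Hgrp_mult[of "take p w" P 2 "r @ drop (p + length l) w"] parts r2
    by simp
  finally show ?thesis using parts r2 w' by simp
qed

lemma coll_steps_sound:
  assumes st: "(coll_step P C)\<^sup>*\<^sup>* w w'" and w: "w \<in> words_over P 2" and wf: "pcp_wf P" and aux: "aux_ok P C"
  shows "w' \<in> words_over P 2 \<and> cls P 2 w = cls P 2 w'"
  using st
proof (induct rule: rtranclp_induct)
  case base then show ?case using w by simp
next
  case (step y z) then show ?case using coll_step_sound[OF step(2) _ wf aux] by simp
qed

lemma take_prefix_nth: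
  assumes "take (length l) x = l" "q < length l"
  shows "x ! q = l ! q"
proof -
  have "q < length x" using assms by (metis length_take min_less_iff_conj)
  then show ?thesis using assms by (metis nth_take)
qed

lemma coll_rule_first:
  assumes "coll_rule P C i k l r" "coll_rule P C i k l' r'" "l ! 0 = l' ! 0"
    "length l \<ge> 2 \<Longrightarrow> length l' \<ge> 2 \<Longrightarrow> l ! 1 = l' ! 1"
  shows "l = l' \<and> r = r'"
  using assms(1)
proof (cases rule: coll_rule.cases)
  case (power m)
  show ?thesis using assms(2,3) power by (cases rule: coll_rule.cases) auto
next
  case (conj_a j)
  show ?thesis using assms(2,3,4) conj_a by (cases rule: coll_rule.cases) auto
next
  case (conj_b j)
  show ?thesis using assms(2,3,4) conj_b by (cases rule: coll_rule.cases) auto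
next
  case (conj_c j)
  show ?thesis using assms(2,3,4) conj_c by (cases rule: coll_rule.cases) auto
next
  case (conj_d j)
  show ?thesis using assms(2,3,4) conj_d by (cases rule: coll_rule.cases) auto
next
  case (inverse m)
  show ?thesis using assms(2,3) inverse by (cases rule: coll_rule.cases) auto
next
  case (free b)
  show ?thesis using assms(2,3) free by (cases rule: coll_rule.cases) auto
qed

lemma coll_step_det:
  assumes s1: "coll_step P C w w1" and s2: "coll_step P C w w2"
  shows "w1 = w2"
proof -
  obtain i k p l r where o1: "coll_occ P C w i k p l r" and w1: "w1 = take p w @ r @ drop (p + length l) w"
    and m1: "\<forall>i' k' p' l' r'. coll_occ P C w i' k' p' l' r' \<longrightarrow> i < i' \<or> (i = i' \<and> (p < p' \<or> (p = p' \<and> k \<le> k')))"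
    using s1 unfolding coll_step_def by blast
  obtain i' k' p' l' r' where o2: "coll_occ P C w i' k' p' l' r'" and w2: "w2 = take p' w @ r' @ drop (p' + length l') w"
    and m2: "\<forall>i k p l r. coll_occ P C w i k p l r \<longrightarrow> i' < i \<or> (i' = i \<and> (p' < p \<or> (p' = p \<and> k' \<le> k)))"
    using s2 unfolding coll_step_def by blast
  have a: "i < i' \<or> (i = i' \<and> (p < p' \<or> (p = p' \<and> k \<le> k')))" using m1 o2 by blast
  have b: "i' < i \<or> (i' = i \<and> (p' < p \<or> (p' = p \<and> k' \<le> k)))" using m2 o1 by blast
  have eq: "i = i'" "p = p'" "k = k'" using a b by linarith+
  have r1: "coll_rule P C i k l r" and t1: "take (length l) (drop p w) = l"
    using o1 by (simp_all add: coll_occ_def)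
  have r2: "coll_rule P C i k l' r'" and t2: "take (length l') (drop p w) = l'"
    using o2 eq by (simp_all add: coll_occ_def)
  have ne: "l \<noteq> []" "l' \<noteq> []" using coll_rule_props[OF r1] coll_rule_props[OF r2] by blast+
  have "l ! 0 = drop p w ! 0" using take_prefix_nth[OF t1] ne by simp
  moreover have "l' ! 0 = drop p w ! 0" using take_prefix_nth[OF t2] ne by simp
  ultimately have f: "l ! 0 = l' ! 0" by simp
  have s: "l ! 1 = l' ! 1" if "length l \<ge> 2" "length l' \<ge> 2"
  proof -
    have "l ! 1 = drop p w ! 1" using take_prefix_nth[OF t1] that by simp
    moreover have "l' ! 1 = drop p w ! 1" using take_prefix_nth[OF t2] that by simp
    ultimately show ?thesis by simp
  qed
  have "l = l' \<and> r = r'" by (rule coll_rule_first[OF r1 r2 f s])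
  then show ?thesis using w1 w2 eq by simp
qed

lemma coll_result_step:
  assumes "coll_result P C w v" "coll_step P C w w'"
  shows "coll_result P C w' v"
proof -
  have rt: "(coll_step P C)\<^sup>*\<^sup>* w v" and nv: "\<not> (\<exists>v'. coll_step P C v v')"
    using assms(1) by (simp_all add: coll_result_def)
  from rt show ?thesis
  proof (cases rule: converse_rtranclpE)
    case base then show ?thesis using nv assms(2) by blast
  next
    case (step y)
    have "y = w'" using coll_step_det[OF step(1) assms(2)] .
    then show ?thesis using step(2) nv by (simp add: coll_result_def)
  qed
qed

lemma coll_rule_one_shape:
  assumes "coll_rule P C 1 k l r" "rel_order P 1 = None"
  shows "(k = 1 \<and> (\<exists>j b b'. 1 < j \<and> l = [(j, b), (1, b')])) \<or> (k = 0 \<and> (\<exists>b. l = [(1, b), (1, \<not> b)]))"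
  using assms(1)
proof (cases rule: coll_rule.cases)
  case (power m) then show ?thesis using assms(2) by simp
next
  case (inverse m) then show ?thesis using assms(2) by simp
qed blast+

lemma occ_one_shape:
  assumes o: "coll_occ P C W 1 k p l r" and n1: "rel_order P 1 = None"
  shows "Suc p < length W \<and> fst (W ! Suc p) = 1 \<and> (k = 1 \<or> (k = 0 \<and> fst (W ! p) = 1))"
proof -
  have rl: "coll_rule P C 1 k l r" and t: "take (length l) (drop p W) = l" and len: "p + length l \<le> length W"
    using o by (simp_all add: coll_occ_def)
  from coll_rule_one_shape[OF rl n1] show ?thesis
  proof
    assume "k = 1 \<and> (\<exists>j b b'. 1 < j \<and> l = [(j, b), (1, b')])"
    then obtain j b b' where l: "k = 1" "l = [(j, b), (1, b')]" by blast
    have "drop p W ! 1 = l ! 1" using take_prefix_nth[OF t] l by simp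
    moreover have "Suc p < length W" using len l by simp
    ultimately show ?thesis using l by simp
  next
    assume "k = 0 \<and> (\<exists>b. l = [(1, b), (1, \<not> b)])"
    then obtain b where l: "k = 0" "l = [(1, b), (1, \<not> b)]" by blast
    have "drop p W ! 1 = l ! 1" "drop p W ! 0 = l ! 0" using take_prefix_nth[OF t] l by simp_all
    moreover have "Suc p < length W" using len l by simp
    ultimately show ?thesis using l by simp
  qed
qed

lemma occ_ge_one: "coll_occ P C W i k p l r \<Longrightarrow> 1 \<le> i"
proof -
  assume "coll_occ P C W i k p l r"
  then have "coll_rule P C i k l r" by (simp add: coll_occ_def)
  then show ?thesis using coll_rule_props[of P C i k l r] by simp
qed

lemma idx_one:
  assumes u: "u \<in> words_over P 2" and rest: "rest \<in> words_over P 2" and x: "fst x = 1" and y: "fst y = 1"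
    and q: "q < length (x # u @ y # rest)" and f: "fst ((x # u @ y # rest) ! q) = 1"
  shows "q = 0 \<or> q = Suc (length u)"
proof (rule ccontr)
  assume "\<not> (q = 0 \<or> q = Suc (length u))"
  then obtain q' where q': "q = Suc q'" "q' \<noteq> length u" by (cases q) auto
  show False
  proof (cases "q' < length u")
    case True
    then have "(x # u @ y # rest) ! q = u ! q'" using q' by (simp add: nth_append)
    moreover have "u ! q' \<in> set u" using True by simp
    ultimately show False using u f by (auto simp: words_over_def)
  next
    case False
    then have gt: "q' > length u" using q' by simp
    define t where "t = q' - Suc (length u)"
    have t: "q' = Suc (length u) + t" using gt unfolding t_def by simp
    then have "(x # u @ y # rest) ! q = rest ! t" using q' by (simp add: nth_append)
    moreover have "t < length rest" using q q' t by simp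
    then have "rest ! t \<in> set rest" by simp
    ultimately show False using rest f by (auto simp: words_over_def)
  qed
qed

definition img :: "pcp \<Rightarrow> pcp_aux \<Rightarrow> letter \<Rightarrow> word" where
  "img P C x = (if snd x then gvec P 1 (ca P 1 (fst x)) else gvec P 1 (cc C 1 (fst x)))"

lemma img_words: "img P C x \<in> words_over P 2"
  unfolding img_def using gvec_words[of P 1] by (simp add: numeral_2_eq_2)

lemma concat_img_words: "concat (map (img P C) u) \<in> words_over P 2"
  by (induct u) (simp_all add: img_words)

lemma step_move:
  assumes n1: "rel_order P 1 = None" and u0: "u0 \<in> words_over P 2" and rest: "rest \<in> words_over P 2"
    and k: "2 \<le> k" "k \<le> ngen P" and nb: "\<not> b \<Longrightarrow> rel_order P k = None"
  shows "coll_step P C ((1, False) # u0 @ (k, b) # (1, True) # rest)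
                       ((1, False) # u0 @ (1, True) # img P C (k, b) @ rest)"
proof -
  let ?W = "(1::nat, False) # u0 @ (k, b) # (1, True) # rest"
  let ?p = "Suc (length u0)"
  let ?l = "[(k, b), (1::nat, True)]"
  let ?r = "(1::nat, True) # img P C (k, b)"
  have rl: "coll_rule P C 1 1 ?l ?r"
  proof (cases b)
    case True then show ?thesis using coll_rule.conj_a[of 1 k P C] k by (simp add: img_def)
  next
    case False then show ?thesis using coll_rule.conj_c[of 1 k P C] k nb by (simp add: img_def)
  qed
  have occ: "coll_occ P C ?W 1 1 ?p ?l ?r" unfolding coll_occ_def using rl by simp
  have res: "(1, False) # u0 @ (1, True) # img P C (k, b) @ rest = take ?p ?W @ ?r @ drop (?p + length ?l) ?W"
    by simp
  have W: "?W = (1, False) # (u0 @ [(k, b)]) @ (1, True) # rest" by simp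
  have u: "u0 @ [(k, b)] \<in> words_over P 2" using u0 k by simp
  have mn: "1 < i' \<or> (1 = i' \<and> (?p < p' \<or> (?p = p' \<and> 1 \<le> k')))"
    if o: "coll_occ P C ?W i' k' p' l' r'" for i' k' p' l' r'
  proof (cases "i' = 1")
    case False then show ?thesis using occ_ge_one[OF o] by simp
  next
    case True
    have sh: "Suc p' < length ?W \<and> fst (?W ! Suc p') = 1 \<and> (k' = 1 \<or> (k' = 0 \<and> fst (?W ! p') = 1))"
      using occ_one_shape[OF o[unfolded True] n1] .
    have "Suc p' = 0 \<or> Suc p' = Suc (length (u0 @ [(k, b)]))"
      using idx_one[OF u rest, of "(1, False)" "(1, True)" "Suc p'"] sh W by simp
    then have pp: "p' = ?p" by simp
    have "k' = 1"
    proof (rule ccontr)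
      assume "k' \<noteq> 1"
      then have "p' < length ?W" "fst (?W ! p') = 1" using sh by simp_all
      then have "p' = 0 \<or> p' = Suc (length (u0 @ [(k, b)]))"
        using idx_one[OF u rest, of "(1, False)" "(1, True)" p'] W by simp
      then show False using pp by simp
    qed
    then show ?thesis using True pp by simp
  qed
  show ?thesis unfolding coll_step_def
    by (rule exI[of _ 1], rule exI[of _ 1], rule exI[of _ ?p], rule exI[of _ ?l], rule exI[of _ ?r])
       (use occ res mn in blast)
qed

lemma step_cancel:
  assumes n: "1 \<le> ngen P"
  shows "coll_step P C ((1, False) # (1, True) # rest) rest"
proof -
  let ?W = "(1::nat, False) # (1, True) # rest"
  have rl: "coll_rule P C 1 0 [(1, False), (1, True)] []"
    using coll_rule.free[of 1 P C False] n by simp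
  have occ: "coll_occ P C ?W 1 0 0 [(1, False), (1, True)] []" unfolding coll_occ_def using rl by simp
  have mn: "1 < i' \<or> (1 = i' \<and> (0 < p' \<or> (0 = p' \<and> (0::nat) \<le> k')))"
    if o: "coll_occ P C ?W i' k' p' l' r'" for i' k' p' l' r'
    using occ_ge_one[OF o] by auto
  show ?thesis unfolding coll_step_def
    by (rule exI[of _ 1], rule exI[of _ 0], rule exI[of _ 0], rule exI[of _ "[(1, False), (1, True)]"],
        rule exI[of _ "[]"]) (use occ mn in simp)
qed

lemma step_init:
  assumes n1: "rel_order P 1 = None" and j: "2 \<le> j" "j \<le> ngen P"
  shows "coll_step P C [(j, True), (1, False), (1, True)] ((1, False) # gvec P 1 (cb P 1 j) @ [(1, True)])"
proof -
  let ?W = "[(j, True), (1::nat, False), (1, True)]"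
  let ?l = "[(j, True), (1::nat, False)]"
  let ?r = "(1::nat, False) # gvec P 1 (cb P 1 j)"
  have rl: "coll_rule P C 1 1 ?l ?r" using coll_rule.conj_b[of 1 j P C] j n1 by simp
  have occ: "coll_occ P C ?W 1 1 0 ?l ?r" unfolding coll_occ_def using rl by simp
  have mn: "1 < i' \<or> (1 = i' \<and> (0 < p' \<or> (0 = p' \<and> (1::nat) \<le> k')))"
    if o: "coll_occ P C ?W i' k' p' l' r'" for i' k' p' l' r'
  proof (cases "i' = 1")
    case False then show ?thesis using occ_ge_one[OF o] by simp
  next
    case True
    have sh: "Suc p' < length ?W \<and> fst (?W ! Suc p') = 1 \<and> (k' = 1 \<or> (k' = 0 \<and> fst (?W ! p') = 1))"
      using occ_one_shape[OF o[unfolded True] n1] .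
    show ?thesis
    proof (cases "k' = 1")
      case True then show ?thesis using \<open>i' = 1\<close> by auto
    next
      case False
      then have "fst (?W ! p') = 1" using sh by simp
      then have "p' \<noteq> 0" using j by (cases p') simp_all
      then show ?thesis using \<open>i' = 1\<close> by simp
    qed
  qed
  have res: "(1, False) # gvec P 1 (cb P 1 j) @ [(1, True)] = take 0 ?W @ ?r @ drop (0 + length ?l) ?W"
    by simp
  show ?thesis unfolding coll_step_def
    by (rule exI[of _ 1], rule exI[of _ 1], rule exI[of _ 0], rule exI[of _ ?l], rule exI[of _ ?r])
       (use occ res mn in blast)
qed

lemma trace:
  assumes n1: "rel_order P 1 = None" and n: "1 \<le> ngen P"
  shows "u \<in> words_over P 2 \<Longrightarrow> (\<forall>k. (k, False) \<in> set u \<longrightarrow> rel_order P k = None) \<Longrightarrow>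
     rest \<in> words_over P 2 \<Longrightarrow> coll_result P C ((1, False) # u @ (1, True) # rest) v \<Longrightarrow>
     coll_result P C (concat (map (img P C) u) @ rest) v"
proof (induct u arbitrary: rest rule: rev_induct)
  case Nil
  then show ?case using coll_result_step[OF _ step_cancel[OF n]] by simp
next
  case (snoc x u0)
  obtain k b where x: "x = (k, b)" by (cases x)
  have u0: "u0 \<in> words_over P 2" and k: "2 \<le> k" "k \<le> ngen P" using snoc(2) x by simp_all
  have nb: "\<not> b \<Longrightarrow> rel_order P k = None" using snoc(3) x by simp
  have st: "coll_step P C ((1, False) # u0 @ (k, b) # (1, True) # rest)
                       ((1, False) # u0 @ (1, True) # img P C (k, b) @ rest)"
    by (rule step_move[OF n1 u0 snoc(4) k nb])
  have "coll_result P C ((1, False) # u0 @ (1, True) # (img P C (k, b) @ rest)) v"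
    using coll_result_step[OF _ st] snoc(5) x by simp
  then have "coll_result P C (concat (map (img P C) u0) @ img P C (k, b) @ rest) v"
    using snoc(1)[of "img P C (k, b) @ rest"] u0 snoc(3) snoc(4) img_words[of P C "(k, b)"] by simp
  then show ?case using x by simp
qed

lemma gvec_neg: "(k, False) \<in> set (gvec P i v) \<Longrightarrow> v k < 0 \<and> Suc i \<le> k \<and> k \<le> ngen P"
  unfolding gvec_def gpow_def by (auto split: if_splits)

lemma sigma_img:
  assumes h: "\<sigma> \<in> hom (Hgrp P 2) (Hgrp P 2)"
    and gen: "\<forall>j \<in> {2..ngen P}. \<sigma> (cls P 2 [(j, True)]) = cls P 2 (gvec P 1 (ca P 1 j))"
    and aux: "aux_ok P C"
  shows "u \<in> words_over P 2 \<Longrightarrow> (\<forall>k. (k, False) \<in> set u \<longrightarrow> rel_order P k = None) \<Longrightarrow>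
     \<sigma> (cls P 2 u) = cls P 2 (concat (map (img P C) u))"
proof (induct u)
  interpret H: group "Hgrp P 2" by (rule Hgrp_group)
  have gh: "group_hom (Hgrp P 2) (Hgrp P 2) \<sigma>"
    using h by (simp add: group_hom_def group_hom_axioms_def H.is_group)
  case Nil
  show ?case using group_hom.hom_one[OF gh] by (simp add: Hgrp_one)
next
  interpret H: group "Hgrp P 2" by (rule Hgrp_group)
  have gh: "group_hom (Hgrp P 2) (Hgrp P 2) \<sigma>"
    using h by (simp add: group_hom_def group_hom_axioms_def H.is_group)
  case (Cons x u)
  obtain j b where x: "x = (j, b)" by (cases x)
  have u: "u \<in> words_over P 2" and j: "2 \<le> j" "j \<le> ngen P" using Cons(2) x by simp_all
  have xw: "[x] \<in> words_over P 2" using j x by simp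
  have jw: "[(j, True)] \<in> words_over P 2" using j by simp
  have ih: "\<sigma> (cls P 2 u) = cls P 2 (concat (map (img P C) u))" using Cons(1) u Cons(3) by simp
  have sx: "\<sigma> (cls P 2 [x]) = cls P 2 (img P C x)"
  proof (cases b)
    case True then show ?thesis using gen j x by (simp add: img_def)
  next
    case False
    have none: "rel_order P j = None" using Cons(3) x False by simp
    have "cls P 2 [x] = inv\<^bsub>Hgrp P 2\<^esub> (cls P 2 [(j, True)])"
      using x False cls_inv_letter[OF j] by simp
    then have "\<sigma> (cls P 2 [x]) = inv\<^bsub>Hgrp P 2\<^esub> (cls P 2 (gvec P 1 (ca P 1 j)))"
      using group_hom.hom_inv[OF gh cls_carrier[OF jw]] gen j by simp
    also have "\<dots> = cls P 2 (gvec P 1 (cc C 1 j))"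
      using aux none j unfolding aux_ok_def by (intro aux_cls[symmetric]) (auto simp: numeral_2_eq_2)
    finally show ?thesis using x False by (simp add: img_def)
  qed
  have "\<sigma> (cls P 2 (x # u)) = \<sigma> (cls P 2 [x]) \<otimes>\<^bsub>Hgrp P 2\<^esub> \<sigma> (cls P 2 u)"
    using Hgrp_mult[OF xw u] group_hom.hom_mult[OF gh cls_carrier[OF xw] cls_carrier[OF u]] by simp
  also have "\<dots> = cls P 2 (concat (map (img P C) (x # u)))"
    unfolding sx ih using Hgrp_mult[OF img_words concat_img_words] by simp
  finally show ?case .
qed

theorem lemma12:
  fixes P :: pcp and C :: pcp_aux and \<sigma> :: "word set \<Rightarrow> word set"
  assumes "1 \<le> ngen P"
    and "pcp_wf P"
    and "aux_ok P C"
    and "rel_order P 1 = None"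
    and "consistent P 2"
    and "\<sigma> \<in> hom (Hgrp P 2) (Hgrp P 2)"
    and "\<forall>j \<in> {2..ngen P}. \<sigma> (cls P 2 [(j, True)]) = cls P 2 (gvec P 1 (ca P 1 j))"
    and "\<forall>j \<in> {2..ngen P}. \<exists>v. coll_result P C [(j, True), (1, False), (1, True)] v
                              \<and> coll_result P C [(j, True)] v"
  shows "\<sigma> \<in> iso (Hgrp P 2) (Hgrp P 2) \<and>
         (\<exists>\<tau> \<in> hom (Hgrp P 2) (Hgrp P 2).
            (\<forall>j \<in> {2..ngen P}. \<tau> (cls P 2 [(j, True)]) = cls P 2 (gvec P 1 (cb P 1 j))) \<and>
            (\<forall>x \<in> carrier (Hgrp P 2). \<tau> x = inv_into (carrier (Hgrp P 2)) \<sigma> x))"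
proof -
  note n = assms(1) and wf = assms(2) and aux = assms(3) and n1 = assms(4) and h = assms(6)
    and gen = assms(7) and coll = assms(8)
  interpret H: group "Hgrp P 2" by (rule Hgrp_group)
  have gh: "group_hom (Hgrp P 2) (Hgrp P 2) \<sigma>"
    using h by (simp add: group_hom_def group_hom_axioms_def H.is_group)
  let ?u = "\<lambda>j. gvec P 1 (cb P 1 j)"
  have uw: "?u j \<in> words_over P 2" for j using gvec_words[of P 1] by (simp add: numeral_2_eq_2)
  have key: "\<sigma> (cls P 2 (?u j)) = cls P 2 [(j, True)]" if j: "2 \<le> j" "j \<le> ngen P" for j
  proof -
    obtain v where v: "coll_result P C [(j, True), (1, False), (1, True)] v"
        "coll_result P C [(j, True)] v" using bspec[OF coll, of j] j by auto
    have inv_ok: "\<forall>k. (k, False) \<in> set (?u j) \<longrightarrow> rel_order P k = None"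
    proof (intro allI impI)
      fix k assume "(k, False) \<in> set (?u j)"
      then have kk: "cb P 1 j k < 0" "2 \<le> k" "k \<le> ngen P" using gvec_neg[of k P 1 "cb P 1 j"] by (auto simp: numeral_2_eq_2)
      have "in_range P k (cb P 1 j k)" using wf j kk unfolding pcp_wf_def by auto
      then show "rel_order P k = None" using kk(1) by (auto simp: in_range_def split: option.splits)
    qed
    have "coll_result P C ((1, False) # ?u j @ (1, True) # []) v"
      using coll_result_step[OF v(1) step_init[OF n1 j]] by simp
    then have r: "coll_result P C (concat (map (img P C) (?u j)) @ []) v"
      by (rule trace[OF n1 n uw inv_ok words_over_Nil])
    have "cls P 2 (concat (map (img P C) (?u j))) = cls P 2 v"
      using coll_steps_sound[OF _ concat_img_words wf aux] r by (simp add: coll_result_def)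
    moreover have "cls P 2 [(j, True)] = cls P 2 v"
      using coll_steps_sound[OF _ _ wf aux] v(2) j by (simp add: coll_result_def)
    ultimately show ?thesis using sigma_img[OF h gen aux uw inv_ok] by simp
  qed
  have surj: "\<sigma> ` carrier (Hgrp P 2) = carrier (Hgrp P 2)"
  proof
    show "\<sigma> ` carrier (Hgrp P 2) \<subseteq> carrier (Hgrp P 2)" using h by (auto simp: hom_in_carrier)
    have "cls P 2 w \<in> \<sigma> ` carrier (Hgrp P 2)" if "w \<in> words_over P 2" for w
      using that
    proof (induct w)
      case Nil
      have "\<sigma> \<one>\<^bsub>Hgrp P 2\<^esub> = cls P 2 []" using group_hom.hom_one[OF gh] by (simp add: Hgrp_one)
      then show ?case using H.one_closed by (metis imageI)
    next
      case (Cons x w)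
      obtain j b where x: "x = (j, b)" by (cases x)
      have w: "w \<in> words_over P 2" and j: "2 \<le> j" "j \<le> ngen P" using Cons(2) x by simp_all
      have xw: "[x] \<in> words_over P 2" using j x by simp
      obtain a where a: "a \<in> carrier (Hgrp P 2)" "cls P 2 w = \<sigma> a" using Cons(1)[OF w] by blast
      have ca: "cls P 2 (?u j) \<in> carrier (Hgrp P 2)" using uw by (rule cls_carrier)
      obtain c where c: "c \<in> carrier (Hgrp P 2)" "cls P 2 [x] = \<sigma> c"
      proof (cases b)
        case True then show ?thesis using that[OF ca] key[OF j] x by simp
      next
        case False
        have "cls P 2 [x] = inv\<^bsub>Hgrp P 2\<^esub> (\<sigma> (cls P 2 (?u j)))"
          using x False cls_inv_letter[OF j] key[OF j] by simp
        also have "\<dots> = \<sigma> (inv\<^bsub>Hgrp P 2\<^esub> (cls P 2 (?u j)))"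
          using group_hom.hom_inv[OF gh ca] by simp
        finally show ?thesis using that[OF H.inv_closed[OF ca]] by simp
      qed
      have "cls P 2 (x # w) = \<sigma> (c \<otimes>\<^bsub>Hgrp P 2\<^esub> a)"
        using Hgrp_mult[OF xw w] group_hom.hom_mult[OF gh c(1) a(1)] a c by simp
      then show ?case using H.m_closed[OF c(1) a(1)] by (metis imageI)
    qed
    then show "carrier (Hgrp P 2) \<subseteq> \<sigma> ` carrier (Hgrp P 2)" by (auto simp: Hgrp_carrier)
  qed
  have acc: "acc_in (Hgrp P 2) (carrier (Hgrp P 2))"
    using GK_acc[OF wf, of 2] n by (simp add: Hgrp_carrier)
  have inj: "inj_on \<sigma> (carrier (Hgrp P 2))" by (rule H.hopfian[OF h surj acc])
  have iso: "\<sigma> \<in> iso (Hgrp P 2) (Hgrp P 2)" using h surj inj by (simp add: iso_iff)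
  let ?\<tau> = "inv_into (carrier (Hgrp P 2)) \<sigma>"
  have th: "?\<tau> \<in> hom (Hgrp P 2) (Hgrp P 2)" using H.iso_set_sym[OF iso] by (rule iso_imp_homomorphism)
  have tg: "?\<tau> (cls P 2 [(j, True)]) = cls P 2 (gvec P 1 (cb P 1 j))" if "j \<in> {2..ngen P}" for j
    using that key inj cls_carrier[OF uw] by (intro inv_into_f_eq) auto
  show ?thesis using iso th tg by blast
qed


end
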